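(* In the setting where $\psi$ is a helicoidal elliptic improper affine map with Weierstrass data $G=ae^z$, $F=-ae^{-z}$ ($a\neq0$), $c\in\mathbb{R}\setminus\{0\}$, $b=\sqrt{1+4a^2c}$, and $\widetilde\psi$ is the improper affine map with Weierstrass data $(G+R,\,F+\tfrac{1}{cR})$ where $R=\frac{e^{z}}{2ac}\frac{1+b+(1-b)ke^{bz}}{1+ke^{bz}}$, $k\in\mathbb{C}$: if $b=n/m\in\mathbb{Q}\setminus\{0,1\}$ with $n/m$ irreducible, then $\widetilde\psi$ is $2m\pi$-periodic in one variable, its singular set is contained in a compact set, and it has $2n$ complete embedded ends of revolution type.
   Context: An elliptic improper affine map on a Riemann surface is an improper affine sphere with affine normal $(0,0,1)$ allowed to have singular points where the affine metric degenerates but the affine conormal is well defined; it is represented by holomorphic Weierstrass data $(G,F)$ via $\psi=(G+\overline F,\ \tfrac12|G|^2-\tfrac12|F|^2+\mathrm{Re}(GF)-2\mathrm{Re}\int F\,dG)$, with affine metric $|dG|^2-|dF|^2$. It is helicoidal if $FG$ is a negative-square constant $-a^2$. An end of revolution type is an end asymptotic to an end of a rotational improper affine map (Weierstrass data $(z,\pm r^2/z)$ on $\mathbb{C}\setminus\{0\}$). *)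

theory Defs
  imports "HOL-Analysis.Analysis"
begin

text \<open>Points of R^3 are written as pairs (x, t) with x :: complex the horizontal
  coordinates and t :: real the coordinate in the direction of the affine normal (0,0,1).\<close>

text \<open>The (possibly multivalued) primitive Re (integral F dG) is encoded by a real function h
  whose differential is Re(F dG).\<close>
definition iam_map ::
  "complex set \<Rightarrow> (complex \<Rightarrow> complex) \<Rightarrow> (complex \<Rightarrow> complex) \<Rightarrow> (complex \<Rightarrow> complex \<times> real) \<Rightarrow> bool"
where
  "iam_map U G F \<psi> \<longleftrightarrow> open U \<and> G holomorphic_on U \<and> F holomorphic_on U \<and>
     (\<exists>h :: complex \<Rightarrow> real.
        (\<forall>z\<in>U. (h has_derivative (\<lambda>v. Re (F z * deriv G z * v))) (at z)) \<and>
        (\<forall>z\<in>U. \<psi> z = (G z + cnj (F z),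
                         (cmod (G z))\<^sup>2 / 2 - (cmod (F z))\<^sup>2 / 2 + Re (G z * F z) - 2 * h z)))"

text \<open>Singular set: points where the affine metric |dG|^2 - |dF|^2 degenerates.\<close>
definition singular_set ::
  "complex set \<Rightarrow> (complex \<Rightarrow> complex) \<Rightarrow> (complex \<Rightarrow> complex) \<Rightarrow> complex set" where
  "singular_set U G F = {z \<in> U. cmod (deriv G z) = cmod (deriv F z)}"

definition rotational_iam :: "(complex \<Rightarrow> complex \<times> real) \<Rightarrow> bool" where
  "rotational_iam \<psi>0 \<longleftrightarrow> (\<exists>\<epsilon> r :: real. (\<epsilon> = 1 \<or> \<epsilon> = -1) \<and> r > 0 \<and>
      iam_map (- {0}) (\<lambda>w. w) (\<lambda>w. complex_of_real (\<epsilon> * r\<^sup>2) / w) \<psi>0)"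

definition end_revolution_type ::
  "complex set \<Rightarrow> (complex \<Rightarrow> complex \<times> real) \<Rightarrow> complex \<Rightarrow> bool" where
  "end_revolution_type U \<psi> p \<longleftrightarrow>
     (\<exists>\<psi>0 T \<rho> S \<phi> \<phi>'. rotational_iam \<psi>0 \<and> \<rho> > 0 \<and> ball p \<rho> - {p} \<subseteq> U \<and>
        open S \<and> 0 \<notin> S \<and> homeomorphism (ball p \<rho> - {p}) S \<phi> \<phi>' \<and>
        (filterlim \<phi> at_infinity (at p) \<or> (\<phi> \<longlongrightarrow> 0) (at p)) \<and>
        ((\<lambda>z. \<psi> z - (\<psi>0 (\<phi> z) + T)) \<longlongrightarrow> 0) (at p))"

definition complete_end ::
  "complex set \<Rightarrow> (complex \<Rightarrow> complex) \<Rightarrow> (complex \<Rightarrow> complex) \<Rightarrow> complex \<Rightarrow> bool" where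
  "complete_end U G F p \<longleftrightarrow>
     (\<exists>\<rho>>0. ball p \<rho> - {p} \<subseteq> U \<and>
        (\<forall>\<gamma> \<gamma>' :: real \<Rightarrow> complex.
           (\<forall>t\<in>{0..<1}. (\<gamma> has_vector_derivative \<gamma>' t) (at t within {0..<1})) \<and>
           continuous_on {0..<1} \<gamma>' \<and> \<gamma> ` {0..<1} \<subseteq> ball p \<rho> - {p} \<and>
           (\<gamma> \<longlongrightarrow> p) (at_left 1)
           \<longrightarrow> \<not> ((\<lambda>t. sqrt ((cmod (deriv G (\<gamma> t)))\<^sup>2 + (cmod (deriv F (\<gamma> t)))\<^sup>2) * norm (\<gamma>' t))
                    integrable_on {0..<1})))"

definition embedded_end :: "complex set \<Rightarrow> (complex \<Rightarrow> complex \<times> real) \<Rightarrow> complex \<Rightarrow> bool" where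
  "embedded_end U \<psi> p \<longleftrightarrow> (\<exists>\<rho>>0. ball p \<rho> - {p} \<subseteq> U \<and> inj_on \<psi> (ball p \<rho> - {p}))"

end

theory Submission
  imports Defs "HOL-Real_Asymp.Real_Asymp" "HOL-Complex_Analysis.Complex_Analysis"
begin


definition psi0 :: "complex \<Rightarrow> complex \<times> real" where
  "psi0 w = (w + cnj (1 / w), (cmod w)\<^sup>2 / 2 - (cmod (1 / w))\<^sup>2 / 2 + Re (w * (1 / w)) - 2 * ln (cmod w))"

lemma ln_cmod_deriv:
  assumes "z \<noteq> 0"
  shows "((\<lambda>w. ln (cmod w)) has_derivative (\<lambda>v. Re (1 / z * v))) (at z)"
proof -
  have "((\<lambda>w. ln (cmod w)) has_derivative (\<lambda>h. inverse (cmod z) * (h \<bullet> sgn z))) (at z)"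
    using assms by (auto intro!: derivative_eq_intros has_derivative_norm)
  moreover have "(\<lambda>h. inverse (cmod z) * (h \<bullet> sgn z)) = (\<lambda>v. Re (1 / z * v))"
  proof
    fix v
    have n: "cmod z \<noteq> 0" using assms by simp
    have "1 / z * v = (cnj z * v) / complex_of_real ((cmod z)^2)"
      using complex_div_cnj[of v z] by (simp add: mult.commute)
    then have "Re (1 / z * v) = Re (cnj z * v) / (cmod z)^2" by (simp add: Re_divide_of_real)
    moreover have "inverse (cmod z) * (v \<bullet> sgn z) = (v \<bullet> z) / (cmod z)^2"
      using n by (simp add: sgn_div_norm inner_complex_def power2_eq_square field_simps)
    moreover have "v \<bullet> z = Re (cnj z * v)" by (simp add: inner_complex_def)
    ultimately show "inverse (cmod z) * (v \<bullet> sgn z) = Re (1 / z * v)" by simp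
  qed
  ultimately show ?thesis by simp
qed

lemma rot_psi0: "rotational_iam psi0"
  unfolding rotational_iam_def
proof (intro exI conjI)
  show "(1::real) = 1 \<or> (1::real) = -1" by simp
  show "(1::real) > 0" by simp
  show "iam_map (- {0}) (\<lambda>w. w) (\<lambda>w. complex_of_real (1 * 1\<^sup>2) / w) psi0"
    unfolding iam_map_def
  proof (intro conjI exI ballI)
    show "open (- {0::complex})" by auto
    show "(\<lambda>w. w) holomorphic_on - {0}" by (intro holomorphic_intros)
    show "(\<lambda>w. complex_of_real (1 * 1\<^sup>2) / w) holomorphic_on - {0}" by (auto intro!: holomorphic_intros)
    fix z :: complex assume z: "z \<in> - {0}"
    have "deriv (\<lambda>w. w) z = 1" by simp
    then show "((\<lambda>w. ln (cmod w)) has_derivative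
        (\<lambda>v. Re (complex_of_real (1 * 1\<^sup>2) / z * deriv (\<lambda>w. w) z * v))) (at z)"
      using ln_cmod_deriv[of z] z by simp
    show "psi0 z = (z + cnj (complex_of_real (1 * 1\<^sup>2) / z),
          (cmod z)\<^sup>2 / 2 - (cmod (complex_of_real (1 * 1\<^sup>2) / z))\<^sup>2 / 2 +
          Re (z * (complex_of_real (1 * 1\<^sup>2) / z)) - 2 * ln (cmod z))"
      by (simp add: psi0_def)
  qed
qed

definition sig :: "real \<Rightarrow> real" where "sig s = sqrt (s\<^sup>2 + 4 * ln s)"
definition Lam :: "complex \<Rightarrow> complex" where "Lam y = y * complex_of_real (sig (cmod y) / cmod y)"

lemma sig_gt: "s > 1 \<Longrightarrow> sig s > s"
proof -
  assume s: "s > 1"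
  then have "ln s > 0" by simp
  then have "s\<^sup>2 < s\<^sup>2 + 4 * ln s" by simp
  then have "sqrt (s\<^sup>2) < sqrt (s\<^sup>2 + 4 * ln s)" by (rule real_sqrt_less_mono)
  then show ?thesis using s by (simp add: sig_def)
qed

lemma sig_sq: "s > 1 \<Longrightarrow> (sig s)\<^sup>2 = s\<^sup>2 + 4 * ln s"
proof -
  assume s: "s > 1"
  then have "ln s > 0" by simp
  then show ?thesis by (simp add: sig_def)
qed

lemma sig_mono: "1 < s1 \<Longrightarrow> s1 < s2 \<Longrightarrow> sig s1 < sig s2"
proof -
  assume s: "1 < s1" "s1 < s2"
  then have "ln s1 < ln s2" by simp
  moreover have "s1\<^sup>2 < s2\<^sup>2" using s by (simp add: power_strict_mono)
  ultimately have "s1\<^sup>2 + 4 * ln s1 < s2\<^sup>2 + 4 * ln s2" by simp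
  then show ?thesis unfolding sig_def by (rule real_sqrt_less_mono)
qed

lemma sig_inj: "1 < s1 \<Longrightarrow> 1 < s2 \<Longrightarrow> sig s1 = sig s2 \<Longrightarrow> s1 = s2"
  by (metis linorder_neq_iff sig_mono order_less_irrefl)

lemma norm_Lam: "cmod y > 1 \<Longrightarrow> cmod (Lam y) = sig (cmod y)"
proof -
  assume y: "cmod y > 1"
  then have "sig (cmod y) > 0" using sig_gt[of "cmod y"] by simp
  then show ?thesis using y unfolding Lam_def norm_mult norm_of_real by auto
qed

lemma inj_Lam: "inj_on Lam {y. cmod y > 1}"
proof (rule inj_onI)
  fix x y assume x: "x \<in> {y. cmod y > 1}" and y: "y \<in> {y. cmod y > 1}" and e: "Lam x = Lam y"
  then have "sig (cmod x) = sig (cmod y)" using norm_Lam by (metis mem_Collect_eq)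
  then have "cmod x = cmod y" using sig_inj x y by simp
  moreover have "y \<noteq> 0" using y by auto
  ultimately show "x = y" using e x sig_gt[of "cmod x"] by (simp add: Lam_def)
qed

lemma cont_Lam: "continuous_on {y. cmod y > 1} Lam"
  unfolding Lam_def sig_def
  by (intro continuous_intros) auto

lemma Lam_fst:
  assumes y: "cmod y > 1"
  shows "fst (psi0 (Lam y)) - y = y * complex_of_real ((sig (cmod y) + 1 / sig (cmod y)) / cmod y - 1)"
proof -
  define s where "s = cmod y"
  define \<sigma> where "\<sigma> = sig s"
  have s: "s > 1" using y s_def by simp
  have sg: "\<sigma> > 0" using sig_gt[OF s] s \<sigma>_def by simp
  have yy: "y * cnj y = complex_of_real (s\<^sup>2)" using complex_norm_square[of y] s_def by simp
  have y0: "y \<noteq> 0" using s s_def by auto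
  have "cnj y = complex_of_real (s\<^sup>2) / y" using yy y0 by (simp add: field_simps)
  then have "cnj (1 / Lam y) = y * complex_of_real (1 / (s * \<sigma>))"
    using y0 s sg unfolding Lam_def s_def[symmetric] \<sigma>_def[symmetric]
    by (simp add: field_simps power2_eq_square)
  moreover have "Lam y = y * complex_of_real (\<sigma> / s)" by (simp add: Lam_def s_def \<sigma>_def)
  ultimately have "fst (psi0 (Lam y)) - y = y * (complex_of_real (\<sigma> / s) + complex_of_real (1 / (s * \<sigma>)) - 1)"
    unfolding psi0_def by (simp add: algebra_simps)
  also have "complex_of_real (\<sigma> / s) + complex_of_real (1 / (s * \<sigma>)) - 1 = complex_of_real ((\<sigma> + 1 / \<sigma>) / s - 1)"
  proof -
    have "\<sigma> / s + 1 / (s * \<sigma>) = (\<sigma> + 1 / \<sigma>) / s" using s sg by (simp add: field_simps)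
    then show ?thesis by (metis of_real_add of_real_diff of_real_1)
  qed
  finally show ?thesis by (simp add: s_def \<sigma>_def)
qed

lemma Lam_snd:
  assumes y: "cmod y > 1"
  shows "snd (psi0 (Lam y)) - (cmod y)\<^sup>2 / 2 - 1 = 2 * ln (cmod y) - 2 * ln (sig (cmod y)) - 1 / (2 * (sig (cmod y))\<^sup>2)"
proof -
  define s where "s = cmod y"
  define \<sigma> where "\<sigma> = sig s"
  have s: "s > 1" using y s_def by simp
  have sg: "\<sigma> > 0" using sig_gt[OF s] s \<sigma>_def by simp
  have L0: "Lam y \<noteq> 0" using norm_Lam[OF y] sg s_def \<sigma>_def by auto
  have n1: "cmod (Lam y) = \<sigma>" using norm_Lam[OF y] s_def \<sigma>_def by simp
  have n2: "cmod (1 / Lam y) = 1 / \<sigma>" using n1 by (simp add: norm_divide)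
  have "\<sigma>\<^sup>2 = s\<^sup>2 + 4 * ln s" using sig_sq[OF s] \<sigma>_def by simp
  then show ?thesis unfolding psi0_def s_def[symmetric] \<sigma>_def[symmetric]
    using L0 n1 n2 by (simp add: field_simps power2_eq_square)
qed

lemma psi0_inv: "w \<noteq> 0 \<Longrightarrow> psi0 (1 / cnj w) = (fst (psi0 w), 2 - snd (psi0 w))"
  unfolding psi0_def
  by (simp add: norm_divide ln_div field_simps)


lemma homeo_open:
  fixes \<phi> :: "complex \<Rightarrow> complex"
  assumes "open D" "continuous_on D \<phi>" "inj_on \<phi> D"
  shows "open (\<phi> ` D) \<and> (\<exists>\<phi>'. homeomorphism D (\<phi> ` D) \<phi> \<phi>')"
proof -
  have "open (\<phi> ` D)" by (rule invariance_of_domain[OF assms(2,1,3)])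
  moreover obtain g where "homeomorphism D (\<phi> ` D) \<phi> g"
    using invariance_of_domain_homeomorphism[OF assms(1,2) _ assms(3)] by auto
  ultimately show ?thesis by blast
qed

lemma lim_sig1: "((\<lambda>s. s - sig s - 1 / sig s) \<longlongrightarrow> 0) at_top"
  unfolding sig_def by real_asymp

lemma lim_sig2: "((\<lambda>s. 2 * ln s - 2 * ln (sig s) - 1 / (2 * (sig s)\<^sup>2)) \<longlongrightarrow> 0) at_top"
  unfolding sig_def by real_asymp

lemma end_gen:
  fixes \<psi> :: "complex \<Rightarrow> complex \<times> real" and X :: "complex \<Rightarrow> complex" and U :: "complex set"
  assumes r: "r > 0" and sub: "ball p r - {p} \<subseteq> U"
    and contX: "continuous_on (ball p r - {p}) X" and injX: "inj_on X (ball p r - {p})"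
    and infX: "filterlim X at_infinity (at p)"
    and fstpsi: "\<forall>z\<in>ball p r - {p}. fst (\<psi> z) = X z"
    and kap: "\<kappa> = 1 \<or> \<kappa> = -1"
    and lim: "((\<lambda>z. snd (\<psi> z) - \<kappa> * (cmod (X z - T1))\<^sup>2 / 2) \<longlongrightarrow> C0) (at p)"
  shows "end_revolution_type U \<psi> p"
proof -
  define Y where "Y z = X z - T1" for z
  have infY: "filterlim Y at_infinity (at p)"
    unfolding Y_def using tendsto_add_filterlim_at_infinity[OF tendsto_const infX, of "-T1"] by simp
  have "eventually (\<lambda>z. 2 < cmod (Y z)) (at p)"
  proof -
    have "eventually (\<lambda>z. 3 \<le> cmod (Y z)) (at p)" using infY unfolding filterlim_at_infinity[OF order_refl] by simp
    then show ?thesis by eventually_elim simp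
  qed
  then obtain d where d: "d > 0" and dY: "\<And>z. z \<noteq> p \<Longrightarrow> dist z p < d \<Longrightarrow> 2 < cmod (Y z)"
    unfolding eventually_at by blast
  define \<rho> where "\<rho> = min r d"
  define D where "D = ball p \<rho> - {p}"
  have \<rho>: "\<rho> > 0" using r d \<rho>_def by simp
  have DU: "D \<subseteq> ball p r - {p}" unfolding D_def \<rho>_def by auto
  have oD: "open D" unfolding D_def by auto
  have Ybig: "\<And>z. z \<in> D \<Longrightarrow> 2 < cmod (Y z)"
    using dY unfolding D_def \<rho>_def by (auto simp: dist_commute)
  have contY: "continuous_on D Y" unfolding Y_def
    by (intro continuous_intros continuous_on_subset[OF contX DU])
  have injY: "inj_on Y D" using inj_on_subset[OF injX DU] unfolding Y_def inj_on_def by auto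
  define v where "v z = Lam (Y z)" for z
  have YD: "Y ` D \<subseteq> {y. cmod y > 1}" using Ybig by fastforce
  have contv: "continuous_on D v" unfolding v_def
    by (rule continuous_on_compose2[OF cont_Lam contY YD])
  have injv: "inj_on v D"
  proof -
    have "inj_on (Lam \<circ> Y) D" by (rule comp_inj_on[OF injY inj_on_subset[OF inj_Lam YD]])
    then show ?thesis unfolding v_def comp_def .
  qed
  define s where "s z = cmod (Y z)" for z
  have sinf: "filterlim s at_top (at p)" unfolding s_def
    by (rule filterlim_at_infinity_imp_norm_at_top[OF infY])
  have evD: "eventually (\<lambda>z. z \<in> D) (at p)"
    unfolding eventually_at D_def using \<rho> by (auto intro!: exI[of _ \<rho>] simp: dist_commute)
  have nv: "\<And>z. z \<in> D \<Longrightarrow> cmod (v z) = sig (s z)"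
    unfolding v_def s_def using Ybig norm_Lam by force
  have sgs: "\<And>z. z \<in> D \<Longrightarrow> s z < sig (s z)" using Ybig sig_gt unfolding s_def by force
  have A1: "((\<lambda>z. fst (psi0 (v z)) - Y z) \<longlongrightarrow> 0) (at p)"
  proof -
    have "((\<lambda>z. s z - sig (s z) - 1 / sig (s z)) \<longlongrightarrow> 0) (at p)"
      using filterlim_compose[OF lim_sig1 sinf] by simp
    then have l: "((\<lambda>z. \<bar>s z - sig (s z) - 1 / sig (s z)\<bar>) \<longlongrightarrow> 0) (at p)"
      by (rule tendsto_rabs_zero)
    have "eventually (\<lambda>z. \<bar>s z - sig (s z) - 1 / sig (s z)\<bar> = norm (fst (psi0 (v z)) - Y z)) (at p)"
      using evD
    proof eventually_elim
      case (elim z)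
      have sp: "s z > 1" using Ybig[OF elim] s_def by simp
      have "fst (psi0 (v z)) - Y z = Y z * complex_of_real ((sig (s z) + 1 / sig (s z)) / s z - 1)"
        using Lam_fst[of "Y z"] sp unfolding v_def s_def by simp
      then have "norm (fst (psi0 (v z)) - Y z) = s z * \<bar>(sig (s z) + 1 / sig (s z)) / s z - 1\<bar>"
        unfolding s_def by (simp only: norm_mult norm_of_real)
      also have "\<dots> = \<bar>s z - sig (s z) - 1 / sig (s z)\<bar>"
        using sp by (simp add: abs_mult[symmetric] field_simps abs_minus_commute)
      finally show ?case by simp
    qed
    then have "((\<lambda>z. norm (fst (psi0 (v z)) - Y z)) \<longlongrightarrow> 0) (at p)"
      using tendsto_cong l by fastforce
    then show ?thesis by (simp add: tendsto_norm_zero_iff)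
  qed
  have A2: "((\<lambda>z. snd (psi0 (v z)) - (s z)\<^sup>2 / 2 - 1) \<longlongrightarrow> 0) (at p)"
  proof -
    have l: "((\<lambda>z. 2 * ln (s z) - 2 * ln (sig (s z)) - 1 / (2 * (sig (s z))\<^sup>2)) \<longlongrightarrow> 0) (at p)"
      using filterlim_compose[OF lim_sig2 sinf] by simp
    have "eventually (\<lambda>z. 2 * ln (s z) - 2 * ln (sig (s z)) - 1 / (2 * (sig (s z))\<^sup>2)
                         = snd (psi0 (v z)) - (s z)\<^sup>2 / 2 - 1) (at p)"
      using evD
    proof eventually_elim
      case (elim z)
      have sp: "cmod (Y z) > 1" using Ybig[OF elim] by simp
      show ?case using Lam_snd[OF sp] unfolding v_def s_def by simp
    qed
    then show ?thesis using tendsto_cong l by fastforce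
  qed
  have H: "((\<lambda>z. snd (\<psi> z) - \<kappa> * (s z)\<^sup>2 / 2 - C0) \<longlongrightarrow> 0) (at p)"
    using tendsto_diff[OF lim tendsto_const[of C0]] unfolding s_def Y_def by simp
  have fstD: "\<And>z. z \<in> D \<Longrightarrow> fst (\<psi> z) = Y z + T1" using fstpsi DU unfolding Y_def by auto
  have ball_eq: "ball p \<rho> - {p} = D" unfolding D_def ..
  from kap show ?thesis
  proof
    assume k1: "\<kappa> = 1"
    obtain vinv where hv: "homeomorphism D (v ` D) v vinv" and ov: "open (v ` D)"
      using homeo_open[OF oD contv injv] by blast
    have 0: "0 \<notin> v ` D" using nv sgs Ybig unfolding s_def by force
    have vinf: "filterlim v at_infinity (at p)"
    proof (rule filterlim_norm_at_top_imp_at_infinity)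
      show "filterlim (\<lambda>z. norm (v z)) at_top (at p)"
      proof (rule filterlim_at_top_mono[OF sinf])
        show "eventually (\<lambda>z. s z \<le> norm (v z)) (at p)"
          using evD by eventually_elim (use nv sgs in force)
      qed
    qed
    define T where "T = (T1, C0 - 1)"
    have "((\<lambda>z. (- (fst (psi0 (v z)) - Y z), (snd (\<psi> z) - \<kappa> * (s z)\<^sup>2 / 2 - C0) - (snd (psi0 (v z)) - (s z)\<^sup>2 / 2 - 1))) \<longlongrightarrow> (- 0, 0 - 0)) (at p)"
      by (intro tendsto_intros A1 A2 H)
    then have l: "((\<lambda>z. (- (fst (psi0 (v z)) - Y z), (snd (\<psi> z) - \<kappa> * (s z)\<^sup>2 / 2 - C0) - (snd (psi0 (v z)) - (s z)\<^sup>2 / 2 - 1))) \<longlongrightarrow> 0) (at p)"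
      by (simp add: zero_prod_def)
    have "eventually (\<lambda>z. (- (fst (psi0 (v z)) - Y z), (snd (\<psi> z) - \<kappa> * (s z)\<^sup>2 / 2 - C0) - (snd (psi0 (v z)) - (s z)\<^sup>2 / 2 - 1))
        = \<psi> z - (psi0 (v z) + T)) (at p)"
      using evD
    proof eventually_elim
      case (elim z)
      show ?case using fstD[OF elim] k1 unfolding T_def by (simp add: prod_eq_iff)
    qed
    then have "((\<lambda>z. \<psi> z - (psi0 (v z) + T)) \<longlongrightarrow> 0) (at p)" using tendsto_cong l by fastforce
    note L = this
    show ?thesis unfolding end_revolution_type_def
      apply (rule exI[of _ psi0], rule exI[of _ T], rule exI[of _ \<rho>], rule exI[of _ "v ` D"], rule exI[of _ v], rule exI[of _ vinv])
      using L rot_psi0 \<rho> DU sub ov 0 hv vinf unfolding ball_eq by blast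
  next
    assume k1: "\<kappa> = -1"
    define w where "w z = 1 / cnj (v z)" for z
    have vnz: "\<And>z. z \<in> D \<Longrightarrow> v z \<noteq> 0" using nv sgs Ybig unfolding s_def by force
    have contw: "continuous_on D w" unfolding w_def
      by (intro continuous_intros contv) (use vnz in auto)
    have injw: "inj_on w D" using injv unfolding w_def inj_on_def by auto
    obtain winv where hw: "homeomorphism D (w ` D) w winv" and ow: "open (w ` D)"
      using homeo_open[OF oD contw injw] by blast
    have 0: "0 \<notin> w ` D" unfolding w_def using vnz by auto
    have w0: "(w \<longlongrightarrow> 0) (at p)"
    proof (rule Lim_null_comparison)
      show "((\<lambda>z. inverse (s z)) \<longlongrightarrow> 0) (at p)" by (rule tendsto_inverse_0_at_top[OF sinf])
      show "eventually (\<lambda>z. norm (w z) \<le> inverse (s z)) (at p)"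
        using evD
      proof eventually_elim
        case (elim z)
        have "s z > 1" using Ybig[OF elim] s_def by simp
        then show ?case using nv[OF elim] sgs[OF elim] unfolding w_def
          by (simp add: norm_divide divide_simps)
      qed
    qed
    define T where "T = (T1, C0 - 1)"
    have "((\<lambda>z. (- (fst (psi0 (v z)) - Y z), (snd (\<psi> z) - \<kappa> * (s z)\<^sup>2 / 2 - C0) + (snd (psi0 (v z)) - (s z)\<^sup>2 / 2 - 1))) \<longlongrightarrow> (- 0, 0 + 0)) (at p)"
      by (intro tendsto_intros A1 A2 H)
    then have l: "((\<lambda>z. (- (fst (psi0 (v z)) - Y z), (snd (\<psi> z) - \<kappa> * (s z)\<^sup>2 / 2 - C0) + (snd (psi0 (v z)) - (s z)\<^sup>2 / 2 - 1))) \<longlongrightarrow> 0) (at p)"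
      by (simp add: zero_prod_def)
    have "eventually (\<lambda>z. (- (fst (psi0 (v z)) - Y z), (snd (\<psi> z) - \<kappa> * (s z)\<^sup>2 / 2 - C0) + (snd (psi0 (v z)) - (s z)\<^sup>2 / 2 - 1))
        = \<psi> z - (psi0 (w z) + T)) (at p)"
      using evD
    proof eventually_elim
      case (elim z)
      show ?case using fstD[OF elim] k1 psi0_inv[OF vnz[OF elim]] unfolding T_def w_def
        by (simp add: prod_eq_iff)
    qed
    then have "((\<lambda>z. \<psi> z - (psi0 (w z) + T)) \<longlongrightarrow> 0) (at p)" using tendsto_cong l by fastforce
    note L = this
    show ?thesis unfolding end_revolution_type_def
      apply (rule exI[of _ psi0], rule exI[of _ T], rule exI[of _ \<rho>], rule exI[of _ "w ` D"], rule exI[of _ w], rule exI[of _ winv])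
      using L rot_psi0 \<rho> DU sub ow 0 hw w0 unfolding ball_eq by blast
  qed
qed


lemma ratio_lim:
  fixes N D :: "complex \<Rightarrow> complex"
  assumes dN: "(N has_field_derivative N') (at p)" and dD: "(D has_field_derivative D') (at p)"
    and N0: "N p = 0" and D0: "D p = 0" and D': "D' \<noteq> 0"
  shows "((\<lambda>z. N z / D z) \<longlongrightarrow> N' / D') (at p)"
proof -
  have "((\<lambda>z. (N z - N p) / (z - p)) \<longlongrightarrow> N') (at p)" using dN has_field_derivative_iff by blast
  moreover have "((\<lambda>z. (D z - D p) / (z - p)) \<longlongrightarrow> D') (at p)" using dD has_field_derivative_iff by blast
  ultimately have l: "((\<lambda>z. ((N z - N p) / (z - p)) / ((D z - D p) / (z - p))) \<longlongrightarrow> N' / D') (at p)"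
    using D' by (intro tendsto_divide) auto
  have "eventually (\<lambda>z. ((N z - N p) / (z - p)) / ((D z - D p) / (z - p)) = N z / D z) (at p)"
    unfolding eventually_at by (auto intro!: exI[of _ 1] simp: N0 D0)
  then show ?thesis using tendsto_cong l by fastforce
qed

lemma deriv_near:
  fixes f :: "complex \<Rightarrow> complex"
  assumes hol: "f holomorphic_on ball p r" and r: "r > 0" and e: "e > 0"
  shows "\<exists>\<delta>>0. \<delta> \<le> r \<and> (\<forall>z\<in>ball p \<delta>. cmod (deriv f z - deriv f p) < e)"
proof -
  have "deriv f holomorphic_on ball p r" using holomorphic_deriv[OF hol] by simp
  then have "continuous_on (ball p r) (deriv f)" by (rule holomorphic_on_imp_continuous_on)
  then have "isCont (deriv f) p" using r by (simp add: continuous_on_interior)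
  then obtain d where d: "d > 0" "\<And>z. dist z p < d \<Longrightarrow> dist (deriv f z) (deriv f p) < e"
    using e unfolding continuous_at_eps_delta by blast
  show ?thesis
    by (rule exI[of _ "min d r"]) (use d r in \<open>auto simp: dist_norm norm_minus_commute\<close>)
qed

lemma lip_ball:
  fixes f :: "complex \<Rightarrow> complex"
  assumes hol: "f holomorphic_on ball p r" and d: "\<delta> \<le> r"
    and bd: "\<And>z. z \<in> ball p \<delta> \<Longrightarrow> cmod (deriv f z - c) \<le> B"
    and z1: "z1 \<in> ball p \<delta>" and z2: "z2 \<in> ball p \<delta>"
  shows "cmod ((f z1 - c * z1) - (f z2 - c * z2)) \<le> B * cmod (z1 - z2)"
proof (rule field_differentiable_bound[where f = "\<lambda>z. f z - c * z" and S = "ball p \<delta>"])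
  show "convex (ball p \<delta>)" by simp
  fix z assume z: "z \<in> ball p \<delta>"
  then have zr: "z \<in> ball p r" using d by auto
  have "(f has_field_derivative deriv f z) (at z within ball p \<delta>)"
    using holomorphic_derivI[OF hol _ zr] by simp
  then show "((\<lambda>z. f z - c * z) has_field_derivative deriv f z - c) (at z within ball p \<delta>)"
    by (auto intro!: derivative_eq_intros)
  show "cmod (deriv f z - c) \<le> B" using bd z .
qed (use z1 z2 in auto)

lemma pole_inj:
  fixes \<Phi> B :: "complex \<Rightarrow> complex"
  assumes r: "r > 0" and hP: "\<Phi> holomorphic_on ball p r" and hB: "B holomorphic_on ball p r"
    and P0: "\<Phi> p = 0" and dP: "deriv \<Phi> p \<noteq> 0"
  shows "\<exists>\<rho>>0. \<rho> \<le> r \<and> (\<forall>z\<in>ball p \<rho> - {p}. \<Phi> z \<noteq> 0) \<and>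
     (\<forall>z1\<in>ball p \<rho> - {p}. \<forall>z2\<in>ball p \<rho> - {p}. cmod (1 / \<Phi> z1 - 1 / \<Phi> z2) = cmod (B z1 - B z2) \<longrightarrow> z1 = z2)"
proof -
  define d where "d = deriv \<Phi> p"
  have nd: "cmod d > 0" using dP d_def by simp
  obtain \<delta>1 where \<delta>1: "\<delta>1 > 0" "\<delta>1 \<le> r" "\<And>z. z \<in> ball p \<delta>1 \<Longrightarrow> cmod (deriv \<Phi> z - d) < cmod d / 2"
    using deriv_near[OF hP r, of "cmod d / 2"] nd d_def by auto
  obtain \<delta>2 where \<delta>2: "\<delta>2 > 0" "\<delta>2 \<le> r" "\<And>z. z \<in> ball p \<delta>2 \<Longrightarrow> cmod (deriv B z - deriv B p) < 1"
    using deriv_near[OF hB r, of 1] by auto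
  define M where "M = cmod (deriv B p) + 1"
  have M: "M > 0" unfolding M_def by (simp add: add_nonneg_pos)
  define \<rho> where "\<rho> = min (min \<delta>1 \<delta>2) (sqrt (1 / (9 * cmod d * M)))"
  have \<rho>: "\<rho> > 0" unfolding \<rho>_def using \<delta>1 \<delta>2 nd M by auto
  have \<rho>r: "\<rho> \<le> r" unfolding \<rho>_def using \<delta>1 by auto
  have \<rho>sq: "\<rho>\<^sup>2 \<le> 1 / (9 * cmod d * M)"
  proof -
    have "\<rho> \<le> sqrt (1 / (9 * cmod d * M))" unfolding \<rho>_def by simp
    then have "\<rho>\<^sup>2 \<le> (sqrt (1 / (9 * cmod d * M)))\<^sup>2" using \<rho> by (simp add: power_mono)
    then show ?thesis using nd M by simp
  qed
  have b1: "\<And>z. z \<in> ball p \<rho> \<Longrightarrow> cmod (deriv \<Phi> z - d) \<le> cmod d / 2"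
    using \<delta>1(3) unfolding \<rho>_def by (simp add: less_imp_le)
  have b1': "\<And>z. z \<in> ball p \<rho> \<Longrightarrow> cmod (deriv \<Phi> z - 0) \<le> 3 * cmod d / 2"
  proof -
    fix z assume "z \<in> ball p \<rho>"
    then have "cmod (deriv \<Phi> z - d) \<le> cmod d / 2" by (rule b1)
    then show "cmod (deriv \<Phi> z - 0) \<le> 3 * cmod d / 2" using norm_triangle_ineq2[of "deriv \<Phi> z" d] by simp
  qed
  have b2: "\<And>z. z \<in> ball p \<rho> \<Longrightarrow> cmod (deriv B z - 0) \<le> M"
  proof -
    fix z assume "z \<in> ball p \<rho>"
    then have "cmod (deriv B z - deriv B p) < 1" using \<delta>2(3) unfolding \<rho>_def by simp
    then show "cmod (deriv B z - 0) \<le> M" unfolding M_def using norm_triangle_ineq2[of "deriv B z" "deriv B p"] by simp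
  qed
  have low: "\<And>z1 z2. z1 \<in> ball p \<rho> \<Longrightarrow> z2 \<in> ball p \<rho> \<Longrightarrow> cmod d / 2 * cmod (z1 - z2) \<le> cmod (\<Phi> z1 - \<Phi> z2)"
  proof -
    fix z1 z2 assume z: "z1 \<in> ball p \<rho>" "z2 \<in> ball p \<rho>"
    have "cmod ((\<Phi> z1 - d * z1) - (\<Phi> z2 - d * z2)) \<le> cmod d / 2 * cmod (z1 - z2)"
      by (rule lip_ball[OF hP \<rho>r b1 z])
    moreover have "(\<Phi> z1 - d * z1) - (\<Phi> z2 - d * z2) = (\<Phi> z1 - \<Phi> z2) - d * (z1 - z2)" by (simp add: algebra_simps)
    moreover have "cmod (d * (z1 - z2)) - cmod (\<Phi> z1 - \<Phi> z2) \<le> cmod ((\<Phi> z1 - \<Phi> z2) - d * (z1 - z2))"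
      by (metis norm_minus_commute norm_triangle_ineq2)
    ultimately show "cmod d / 2 * cmod (z1 - z2) \<le> cmod (\<Phi> z1 - \<Phi> z2)" by (simp add: norm_mult)
  qed
  have up: "\<And>z. z \<in> ball p \<rho> \<Longrightarrow> cmod (\<Phi> z) \<le> 3 * cmod d / 2 * \<rho>"
  proof -
    fix z assume z: "z \<in> ball p \<rho>"
    have "cmod ((\<Phi> z - 0 * z) - (\<Phi> p - 0 * p)) \<le> 3 * cmod d / 2 * cmod (z - p)"
      by (rule lip_ball[OF hP \<rho>r b1' z]) (use \<rho> in auto)
    moreover have "cmod (z - p) \<le> \<rho>" using z by (simp add: dist_norm norm_minus_commute less_imp_le)
    moreover have "3 * cmod d / 2 * cmod (z - p) \<le> 3 * cmod d / 2 * \<rho>"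
      using \<open>cmod (z - p) \<le> \<rho>\<close> nd by (intro mult_left_mono) auto
    ultimately show "cmod (\<Phi> z) \<le> 3 * cmod d / 2 * \<rho>" using P0 by simp
  qed
  have Bl: "\<And>z1 z2. z1 \<in> ball p \<rho> \<Longrightarrow> z2 \<in> ball p \<rho> \<Longrightarrow> cmod (B z1 - B z2) \<le> M * cmod (z1 - z2)"
  proof -
    fix z1 z2 assume z: "z1 \<in> ball p \<rho>" "z2 \<in> ball p \<rho>"
    show "cmod (B z1 - B z2) \<le> M * cmod (z1 - z2)" using lip_ball[OF hB \<rho>r b2 z] by simp
  qed
  have nz: "\<And>z. z \<in> ball p \<rho> - {p} \<Longrightarrow> \<Phi> z \<noteq> 0"
  proof -
    fix z assume z: "z \<in> ball p \<rho> - {p}"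
    have "cmod d / 2 * cmod (z - p) \<le> cmod (\<Phi> z - \<Phi> p)" using low[of z p] z \<rho> by auto
    moreover have "cmod d / 2 * cmod (z - p) > 0" using z nd by auto
    ultimately show "\<Phi> z \<noteq> 0" using P0 by auto
  qed
  show ?thesis
  proof (intro exI[of _ \<rho>] conjI ballI impI)
    show "\<rho> > 0" "\<rho> \<le> r" by (fact \<rho>, fact \<rho>r)
    show "\<And>z. z \<in> ball p \<rho> - {p} \<Longrightarrow> \<Phi> z \<noteq> 0" by (rule nz)
    fix z1 z2 assume z1: "z1 \<in> ball p \<rho> - {p}" and z2: "z2 \<in> ball p \<rho> - {p}"
      and eq: "cmod (1 / \<Phi> z1 - 1 / \<Phi> z2) = cmod (B z1 - B z2)"
    show "z1 = z2"
    proof (rule ccontr)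
      assume ne: "z1 \<noteq> z2"
      have n1: "\<Phi> z1 \<noteq> 0" and n2: "\<Phi> z2 \<noteq> 0" using nz z1 z2 by auto
      have "1 / \<Phi> z1 - 1 / \<Phi> z2 = (\<Phi> z2 - \<Phi> z1) / (\<Phi> z1 * \<Phi> z2)" using n1 n2 by (simp add: field_simps)
      then have e1: "cmod (1 / \<Phi> z1 - 1 / \<Phi> z2) = cmod (\<Phi> z1 - \<Phi> z2) / (cmod (\<Phi> z1) * cmod (\<Phi> z2))"
        by (simp add: norm_divide norm_mult norm_minus_commute)
      define q where "q = cmod (z1 - z2)"
      have q: "q > 0" using ne q_def by simp
      have lo: "cmod d / 2 * q \<le> cmod (\<Phi> z1 - \<Phi> z2)" using low z1 z2 q_def by auto
      have den: "cmod (\<Phi> z1) * cmod (\<Phi> z2) \<le> (3 * cmod d / 2 * \<rho>) * (3 * cmod d / 2 * \<rho>)"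
        using up z1 z2 \<rho> nd by (intro mult_mono) auto
      have denp: "cmod (\<Phi> z1) * cmod (\<Phi> z2) > 0" using n1 n2 by simp
      have "cmod d / 2 * q / ((3 * cmod d / 2 * \<rho>) * (3 * cmod d / 2 * \<rho>)) \<le> cmod (\<Phi> z1 - \<Phi> z2) / (cmod (\<Phi> z1) * cmod (\<Phi> z2))"
        using lo den denp q nd by (intro frac_le) auto
      moreover have "cmod d / 2 * q / ((3 * cmod d / 2 * \<rho>) * (3 * cmod d / 2 * \<rho>)) = q * (2 / (9 * cmod d * \<rho>\<^sup>2))"
        using nd \<rho> by (simp add: field_simps power2_eq_square)
      moreover have "2 / (9 * cmod d * \<rho>\<^sup>2) \<ge> 2 * M"
      proof -
        have "9 * cmod d * \<rho>\<^sup>2 \<le> 1 / M" using \<rho>sq nd M by (simp add: field_simps)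
        then have "2 / (9 * cmod d * \<rho>\<^sup>2) \<ge> 2 / (1 / M)" using nd \<rho> M by (intro divide_left_mono) auto
        then show ?thesis using M by simp
      qed
      moreover have "q * (2 * M) \<le> q * (2 / (9 * cmod d * \<rho>\<^sup>2))"
        using calculation(3) q by (intro mult_left_mono) auto
      ultimately have "q * (2 * M) \<le> cmod (B z1 - B z2)" using e1 eq by linarith
      moreover have "cmod (B z1 - B z2) \<le> M * q" using Bl z1 z2 q_def by auto
      moreover have "M * q > 0" using q M by simp
      moreover have "q * (2 * M) = 2 * (M * q)" by simp
      ultimately show False by linarith
    qed
  qed
qed


lemma complete_gen:
  fixes G F :: "complex \<Rightarrow> complex"
  assumes r: "r > 0" and sub: "ball p r - {p} \<subseteq> U" and hol: "G holomorphic_on ball p r - {p}"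
    and inf: "filterlim G at_infinity (at p)"
  shows "complete_end U G F p"
  unfolding complete_end_def
proof (intro exI[of _ r] conjI allI impI)
  show "r > 0" "ball p r - {p} \<subseteq> U" by (fact r, fact sub)
  fix \<gamma> \<gamma>' :: "real \<Rightarrow> complex"
  assume H: "(\<forall>t\<in>{0..<1}. (\<gamma> has_vector_derivative \<gamma>' t) (at t within {0..<1})) \<and>
           continuous_on {0..<1} \<gamma>' \<and> \<gamma> ` {0..<1} \<subseteq> ball p r - {p} \<and> (\<gamma> \<longlongrightarrow> p) (at_left 1)"
  define f where "f t = sqrt ((cmod (deriv G (\<gamma> t)))\<^sup>2 + (cmod (deriv F (\<gamma> t)))\<^sup>2) * norm (\<gamma>' t)" for t
  show "\<not> (\<lambda>t. sqrt ((cmod (deriv G (\<gamma> t)))\<^sup>2 + (cmod (deriv F (\<gamma> t)))\<^sup>2) * norm (\<gamma>' t)) integrable_on {0..<1}"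
  proof
    assume "(\<lambda>t. sqrt ((cmod (deriv G (\<gamma> t)))\<^sup>2 + (cmod (deriv F (\<gamma> t)))\<^sup>2) * norm (\<gamma>' t)) integrable_on {0..<1}"
    then have fi: "f integrable_on {0..<1}" unfolding f_def .
    have oB: "open (ball p r - {p})" by auto
    define I where "I = integral {0..1} f"
    have fi1: "f integrable_on {0..1}"
      by (rule integrable_spike_set[OF fi]) (auto intro: negligible_subset[of "{1}"])
    have f0: "\<And>t. 0 \<le> f t" unfolding f_def by simp
    have bound: "cmod (G (\<gamma> t)) \<le> cmod (G (\<gamma> 0)) + I" if t: "t \<in> {0<..<1}" for t
    proof -
      have sub1: "{0..t} \<subseteq> {0..<1}" using t by auto
      have der: "((G \<circ> \<gamma>) has_vector_derivative \<gamma>' x * deriv G (\<gamma> x)) (at x within {0..t})"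
        if x: "x \<in> {0..t}" for x
      proof (rule field_vector_diff_chain_within)
        have "x \<in> {0..<1}" using x sub1 by auto
        then show "(\<gamma> has_vector_derivative \<gamma>' x) (at x within {0..t})"
          using H has_vector_derivative_within_subset[OF _ sub1] by blast
        have "\<gamma> x \<in> ball p r - {p}" using H \<open>x \<in> {0..<1}\<close> by blast
        then show "(G has_field_derivative deriv G (\<gamma> x)) (at (\<gamma> x) within \<gamma> ` {0..t})"
          using holomorphic_derivI[OF hol oB] by blast
      qed
      have int: "((\<lambda>x. \<gamma>' x * deriv G (\<gamma> x)) has_integral (G \<circ> \<gamma>) t - (G \<circ> \<gamma>) 0) {0..t}"
        using fundamental_theorem_of_calculus[of 0 t "G \<circ> \<gamma>" "\<lambda>x. \<gamma>' x * deriv G (\<gamma> x)"] der t by auto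
      have "cmod ((G \<circ> \<gamma>) t - (G \<circ> \<gamma>) 0) = norm (integral {0..t} (\<lambda>x. \<gamma>' x * deriv G (\<gamma> x)))"
        using int by (simp add: integral_unique)
      also have "\<dots> \<le> integral {0..t} f"
      proof (rule integral_norm_bound_integral)
        show "(\<lambda>x. \<gamma>' x * deriv G (\<gamma> x)) integrable_on {0..t}" using int by blast
        show "f integrable_on {0..t}" by (rule integrable_on_subinterval[OF fi sub1])
        fix x show "norm (\<gamma>' x * deriv G (\<gamma> x)) \<le> f x"
          unfolding f_def norm_mult
          using real_sqrt_sum_squares_ge1[of "cmod (deriv G (\<gamma> x))" "cmod (deriv F (\<gamma> x))"]
          by (simp add: mult.commute mult_left_mono)
      qed
      also have "\<dots> \<le> I" unfolding I_def
        using t f0 by (intro integral_subset_le integrable_on_subinterval[OF fi sub1] fi1) auto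
      finally show ?thesis using norm_triangle_ineq2[of "G (\<gamma> t)" "G (\<gamma> 0)"] by simp
    qed
    have ev01: "eventually (\<lambda>t. t \<in> {0<..<1}) (at_left (1::real))" by (rule eventually_at_left_real) simp
    have "filterlim \<gamma> (at p) (at_left 1)"
    proof (rule filterlim_atI)
      show "(\<gamma> \<longlongrightarrow> p) (at_left 1)" using H by blast
      show "eventually (\<lambda>t. \<gamma> t \<noteq> p) (at_left 1)"
        using ev01 by eventually_elim (use H in force)
    qed
    then have "filterlim (\<lambda>t. G (\<gamma> t)) at_infinity (at_left 1)" by (rule filterlim_compose[OF inf])
    then have "eventually (\<lambda>t. cmod (G (\<gamma> 0)) + I + 1 \<le> cmod (G (\<gamma> t))) (at_left 1)"
    proof -
      have "I \<ge> 0" unfolding I_def using fi1 f0 by (intro integral_nonneg) auto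
      then have "cmod (G (\<gamma> 0)) + I + 1 > 0" by (simp add: add_nonneg_pos)
      then show ?thesis using \<open>filterlim (\<lambda>t. G (\<gamma> t)) at_infinity (at_left 1)\<close>
        unfolding filterlim_at_infinity[OF order_refl] by blast
    qed
    moreover note ev01
    ultimately have "eventually (\<lambda>t. False) (at_left (1::real))"
      by eventually_elim (use bound in force)
    then show False by (simp add: trivial_limit_at_left_real)
  qed
qed


lemma alg_Gt:
  fixes A B C K E V :: complex
  assumes h: "B^2 = 1 + 4*A^2*C" and A: "A \<noteq> 0" and C: "C \<noteq> 0" and D: "1 + K*V \<noteq> 0"
  shows "A*E + E/(2*A*C)*((1+B+(1-B)*K*V)/(1+K*V)) = E*((1+B)^2+(1-B)^2*K*V)/(4*A*C*(1+K*V))"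
proof -
  define D where "D = 1 + K*V"
  have KV: "K*V = D - 1" unfolding D_def by simp
  have "D \<noteq> 0" using D D_def by simp
  then show ?thesis unfolding D_def[symmetric] mult.assoc KV using A C
    apply (simp add: field_simps)
    using h by algebra
qed

lemma alg_Ft:
  fixes A B C K E V :: complex
  assumes A: "A \<noteq> 0" and C: "C \<noteq> 0" and D: "1 + K*V \<noteq> 0" and N: "1+B+(1-B)*K*V \<noteq> 0" and E: "E \<noteq> 0"
  shows "- A * (1/E) + 1 / (C * (E/(2*A*C)*((1+B+(1-B)*K*V)/(1+K*V)))) = A*((1-B)+(1+B)*K*V)/(E*(1+B+(1-B)*K*V))"
proof -
  define D where "D = 1 + K*V"
  define N where "N = 1+B+(1-B)*K*V"
  have KV: "K*V = D - 1" unfolding D_def by simp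
  have NN: "N = 2*B + (1-B)*D" unfolding N_def D_def by (simp add: algebra_simps)
  have "(1-B)+(1+B)*K*V = 2*D - N" unfolding N_def D_def by (simp add: algebra_simps)
  moreover have "D \<noteq> 0" "N \<noteq> 0" using D N D_def N_def by auto
  ultimately show ?thesis unfolding N_def[symmetric] D_def[symmetric] using A C E
    apply (simp add: field_simps)
    by algebra
qed

lemma deriv_rat:
  fixes s B p0 p1 q0 q1 z :: complex
  assumes q: "q0 + q1 * exp (B * z) \<noteq> 0"
  shows "((\<lambda>z. exp (s * z) * (p0 + p1 * exp (B * z)) / (q0 + q1 * exp (B * z))) has_field_derivative
     exp (s * z) * (s * (p0 + p1 * exp (B * z)) * (q0 + q1 * exp (B * z)) + B * exp (B * z) * (p1 * q0 - p0 * q1))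
       / (q0 + q1 * exp (B * z))^2) (at z)"
proof -
  have "((\<lambda>z. exp (s * z) * (p0 + p1 * exp (B * z)) / (q0 + q1 * exp (B * z))) has_field_derivative
     ((s * exp (s * z) * (p0 + p1 * exp (B * z)) + exp (s * z) * (p1 * (B * exp (B * z)))) * (q0 + q1 * exp (B * z))
      - exp (s * z) * (p0 + p1 * exp (B * z)) * (q1 * (B * exp (B * z)))) / ((q0 + q1 * exp (B * z)) * (q0 + q1 * exp (B * z)))) (at z)"
    using q by (auto intro!: derivative_eq_intros simp: algebra_simps)
  moreover have "((s * exp (s * z) * (p0 + p1 * exp (B * z)) + exp (s * z) * (p1 * (B * exp (B * z)))) * (q0 + q1 * exp (B * z))
      - exp (s * z) * (p0 + p1 * exp (B * z)) * (q1 * (B * exp (B * z)))) / ((q0 + q1 * exp (B * z)) * (q0 + q1 * exp (B * z)))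
    = exp (s * z) * (s * (p0 + p1 * exp (B * z)) * (q0 + q1 * exp (B * z)) + B * exp (B * z) * (p1 * q0 - p0 * q1))
       / (q0 + q1 * exp (B * z))^2"
    by (simp add: power2_eq_square algebra_simps)
  ultimately show ?thesis by simp
qed


lemma alg_dG:
  fixes A B C K E V :: complex
  assumes A: "A \<noteq> 0" and C: "C \<noteq> 0" and D: "1 + K*V \<noteq> 0"
  shows "E * (1 * ((1+B)^2/(4*A*C) + (1-B)^2*K/(4*A*C)*V) * (1 + K*V) + B*V*((1-B)^2*K/(4*A*C)*1 - (1+B)^2/(4*A*C)*K)) / (1+K*V)^2
       = E*(1+B+(1-B)*K*V)^2/(4*A*C*(1+K*V)^2)"
proof -
  define D where "D = 1 + K*V"
  have KV: "K*V = D - 1" unfolding D_def by simp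
  have "D \<noteq> 0" using D D_def by simp
  then show ?thesis unfolding D_def[symmetric] using A C
    apply (simp add: field_simps)
    using KV by algebra
qed

lemma alg_dF:
  fixes A B C K E V :: complex
  assumes h: "B^2 = 1 + 4*A^2*C" and E: "E \<noteq> 0" and N: "1+B+(1-B)*K*V \<noteq> 0"
  shows "(1/E) * (-1 * (A*(1-B) + A*(1+B)*K*V) * ((1+B) + (1-B)*K*V) + B*V*(A*(1+B)*K*(1+B) - A*(1-B)*((1-B)*K)))
          / ((1+B) + (1-B)*K*V)^2
       = 4*A^3*C*(1+K*V)^2/(E*(1+B+(1-B)*K*V)^2)"
proof -
  define N where "N = 1+B+(1-B)*K*V"
  have "N \<noteq> 0" using N N_def by simp
  have num: "-1 * (A*(1-B) + A*(1+B)*K*V) * ((1+B) + (1-B)*K*V) + B*V*(A*(1+B)*K*(1+B) - A*(1-B)*((1-B)*K))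
       = 4*A^3*C*(1+K*V)^2"
    using h by algebra
  show ?thesis unfolding num using E N by (simp add: field_simps)
qed

locale sett =
  fixes a c b :: real and k :: complex and n m :: nat
  assumes a: "a \<noteq> 0" and c: "c \<noteq> 0" and k: "k \<noteq> 0"
    and b_def: "b = sqrt (1 + 4 * a\<^sup>2 * c)"
    and b_rat: "b = real n / real m" and m: "m > 0"
    and b0: "b \<noteq> 0" and b1: "b \<noteq> 1"
begin

abbreviation "A \<equiv> complex_of_real a"
abbreviation "B \<equiv> complex_of_real b"
abbreviation "C \<equiv> complex_of_real c"

lemma b_pos: "b > 0"
proof -
  have "b \<ge> 0" using b_rat by simp
  thus ?thesis using b0 by simp
qed

lemma b_sq: "b^2 = 1 + 4 * a^2 * c"
proof -
  have "1 + 4 * a\<^sup>2 * c \<ge> 0"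
  proof (rule ccontr)
    assume "\<not> ?thesis" then have "sqrt (1 + 4 * a\<^sup>2 * c) < 0" by simp
    thus False using b_pos b_def by simp
  qed
  thus ?thesis using b_def by simp
qed

lemma b_sqC: "B^2 = 1 + 4 * A^2 * C"
  using arg_cong[OF b_sq, of complex_of_real] by simp

lemma A0: "A \<noteq> 0" using a by simp
lemma C0: "C \<noteq> 0" using c by simp
lemma B0: "B \<noteq> 0" using b0 by simp
lemma B1: "1 - B \<noteq> 0" using b1 by (metis eq_iff_diff_eq_0 of_real_1 of_real_eq_iff)
lemma B1': "1 + B \<noteq> 0" using b_pos by (metis add.commute add_eq_0_iff2 of_real_1 of_real_add of_real_eq_0_iff add_pos_pos zero_less_one less_irrefl)

definition "u z = exp (B * z)"
definition "D1 z = 1 + k * u z"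
definition "D2 z = 1 + B + (1 - B) * k * u z"
definition "D3 z = (1 - B) + (1 + B) * k * u z"
definition "W z = exp z * ((1 + B)^2 + (1 - B)^2 * k * u z) / (4 * A * C)"
definition "Gx z = W z / D1 z"
definition "Mx z = A * D3 z / exp z"
definition "Fx z = Mx z / D2 z"
definition "U0 = {z. D1 z \<noteq> 0 \<and> D2 z \<noteq> 0}"
definition "hh z = - (a^2) * Re z - (b / c) * Re (1 / D1 z)"

definition "Gt0 = (\<lambda>z. complex_of_real a * exp z + exp z / complex_of_real (2 * a * c) *
                  ((1 + complex_of_real b + complex_of_real (1 - b) * k * exp (complex_of_real b * z))
                   / (1 + k * exp (complex_of_real b * z))))"
definition "Ft0 = (\<lambda>z. - complex_of_real a * exp (- z) + 1 / (complex_of_real c * (exp z / complex_of_real (2 * a * c) *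
                  ((1 + complex_of_real b + complex_of_real (1 - b) * k * exp (complex_of_real b * z))
                   / (1 + k * exp (complex_of_real b * z))))))"

lemma Gt0_eq: "z \<in> U0 \<Longrightarrow> Gt0 z = Gx z"
  using alg_Gt[OF b_sqC A0 C0, of k "u z" "exp z"]
  unfolding Gt0_def Gx_def W_def D1_def U0_def u_def by (simp add: mult.assoc)

lemma Ft0_eq: "z \<in> U0 \<Longrightarrow> Ft0 z = Fx z"
proof -
  assume z: "z \<in> U0"
  have e: "exp (-z) = 1 / exp z" by (simp add: exp_minus field_simps)
  have "Ft0 z = - A * (1 / exp z) + 1 / (C * (exp z / (2 * A * C) * ((1 + B + (1 - B) * k * u z) / (1 + k * u z))))"
    unfolding Ft0_def u_def e by simp
  also have "\<dots> = A * ((1 - B) + (1 + B) * k * u z) / (exp z * (1 + B + (1 - B) * k * u z))"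
    by (rule alg_Ft[OF A0 C0]) (use z in \<open>auto simp: U0_def D1_def D2_def\<close>)
  finally show ?thesis unfolding Fx_def Mx_def D2_def D3_def by simp
qed

lemma Gx_form: "Gx = (\<lambda>z. exp (1 * z) * ((1+B)^2/(4*A*C) + (1-B)^2*k/(4*A*C) * exp (B * z)) / (1 + k * exp (B * z)))"
  unfolding Gx_def W_def D1_def u_def using A0 C0 by (auto simp: field_simps)

lemma Fx_form: "Fx = (\<lambda>z. exp (-1 * z) * (A*(1-B) + A*(1+B)*k * exp (B * z)) / ((1+B) + (1-B)*k * exp (B * z)))"
  unfolding Fx_def Mx_def D2_def D3_def u_def by (auto simp: field_simps exp_minus)

lemma dGx: "D1 z \<noteq> 0 \<Longrightarrow> (Gx has_field_derivative exp z * D2 z ^ 2 / (4 * A * C * D1 z ^ 2)) (at z)"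
proof -
  assume d: "D1 z \<noteq> 0"
  have "(Gx has_field_derivative exp (1 * z) * (1 * ((1+B)^2/(4*A*C) + (1-B)^2*k/(4*A*C) * exp (B * z)) * (1 + k * exp (B * z))
     + B * exp (B * z) * ((1-B)^2*k/(4*A*C) * 1 - (1+B)^2/(4*A*C) * k)) / (1 + k * exp (B * z))^2) (at z)"
    unfolding Gx_form by (rule deriv_rat) (use d in \<open>simp add: D1_def u_def\<close>)
  then show ?thesis using alg_dG[OF A0 C0, of k "exp (B * z)" "exp z"] d
    unfolding D1_def D2_def u_def by (simp add: mult.assoc)
qed

lemma dFx: "D2 z \<noteq> 0 \<Longrightarrow> (Fx has_field_derivative 4 * A^3 * C * D1 z ^ 2 / (exp z * D2 z ^ 2)) (at z)"
proof -
  assume d: "D2 z \<noteq> 0"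
  have "(Fx has_field_derivative exp (-1 * z) * (-1 * (A*(1-B) + A*(1+B)*k * exp (B * z)) * ((1+B) + (1-B)*k * exp (B * z))
     + B * exp (B * z) * (A*(1+B)*k * (1+B) - A*(1-B) * ((1-B)*k))) / ((1+B) + (1-B)*k * exp (B * z))^2) (at z)"
    unfolding Fx_form by (rule deriv_rat) (use d in \<open>simp add: D2_def u_def\<close>)
  moreover have "exp (-1 * z) = 1 / exp z" by (simp add: exp_minus field_simps)
  ultimately show ?thesis using alg_dF[OF b_sqC, of "exp z" k "exp (B * z)"] d
    unfolding D1_def D2_def u_def by (simp add: mult.assoc)
qed


lemma U0_open: "open U0"
proof -
  have "continuous_on UNIV D1" "continuous_on UNIV D2" unfolding D1_def D2_def u_def by (intro continuous_intros)+
  then have "open {z. D1 z \<noteq> 0}" "open {z. D2 z \<noteq> 0}"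
    by (auto intro!: open_Collect_neq simp: continuous_on_eq_continuous_at)
  then show ?thesis unfolding U0_def by (simp add: Collect_conj_eq open_Int)
qed

lemma dGt0: "z \<in> U0 \<Longrightarrow> (Gt0 has_field_derivative exp z * D2 z ^ 2 / (4 * A * C * D1 z ^ 2)) (at z)"
  by (rule has_field_derivative_transform_within_open[OF dGx U0_open]) (auto simp: U0_def Gt0_eq)

lemma dFt0: "z \<in> U0 \<Longrightarrow> (Ft0 has_field_derivative 4 * A^3 * C * D1 z ^ 2 / (exp z * D2 z ^ 2)) (at z)"
  by (rule has_field_derivative_transform_within_open[OF dFx U0_open]) (auto simp: U0_def Ft0_eq)

lemma derivGt0: "z \<in> U0 \<Longrightarrow> deriv Gt0 z = exp z * D2 z ^ 2 / (4 * A * C * D1 z ^ 2)"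
  by (rule DERIV_imp_deriv[OF dGt0])

lemma derivFt0: "z \<in> U0 \<Longrightarrow> deriv Ft0 z = 4 * A^3 * C * D1 z ^ 2 / (exp z * D2 z ^ 2)"
  by (rule DERIV_imp_deriv[OF dFt0])

lemma holGt0: "Gt0 holomorphic_on U0"
  using dGt0 U0_open by (auto simp: holomorphic_on_open)

lemma holFt0: "Ft0 holomorphic_on U0"
  using dFt0 U0_open by (auto simp: holomorphic_on_open)

lemma alg_h0:
  fixes A B C D N E :: complex
  assumes h: "B^2 = 1 + 4*A^2*C" and A: "A \<noteq> 0" and C: "C \<noteq> 0" and D: "D \<noteq> 0"
    and N: "N \<noteq> 0" and E: "E \<noteq> 0" and NN: "N = 2*B + (1-B)*D"
  shows "A * (2*D - N) / E / N * (E * N^2 / (4 * A * C * D^2)) = - (A^2) + B / C * (B * (D - 1)) / D^2"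
  using A C D N E
  apply (simp add: field_simps)
  using h NN by algebra

lemma alg_h:
  fixes A B C K E V :: complex
  assumes h: "B^2 = 1 + 4*A^2*C" and A: "A \<noteq> 0" and C: "C \<noteq> 0" and D: "1 + K*V \<noteq> 0"
    and N: "1+B+(1-B)*K*V \<noteq> 0" and E: "E \<noteq> 0"
  shows "A * ((1 - B) + (1 + B) * K * V) / E / (1 + B + (1 - B) * K * V) * (E * (1 + B + (1 - B) * K * V)^2 / (4 * A * C * (1 + K * V)^2))
     = - (A^2) + B / C * (K * (B * V)) / (1 + K * V)^2"
proof -
  have e1: "(1 - B) + (1 + B) * K * V = 2 * (1 + K*V) - (1+B+(1-B)*K*V)" by (simp add: algebra_simps)
  have e2: "K * (B * V) = B * ((1 + K*V) - 1)" by (simp add: algebra_simps)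
  show ?thesis unfolding e1 e2
    by (rule alg_h0[OF h A C D N E]) (simp add: algebra_simps)
qed

lemma dhh: "z \<in> U0 \<Longrightarrow> (hh has_derivative (\<lambda>v. Re (Ft0 z * deriv Gt0 z * v))) (at z)"
proof -
  assume z: "z \<in> U0"
  define H where "H z = - (A^2) * z - (B / C) * (1 / D1 z)" for z
  have d1: "D1 z \<noteq> 0" using z U0_def by simp
  have dD1: "(D1 has_field_derivative k * (B * u z)) (at z)"
    unfolding D1_def u_def by (auto intro!: derivative_eq_intros)
  have dq: "((\<lambda>z. 1 / D1 z) has_field_derivative (0 * D1 z - 1 * (k * (B * u z))) / (D1 z * D1 z)) (at z)"
    by (rule DERIV_divide[OF DERIV_const dD1 d1])
  have dH0: "(H has_field_derivative (- (A^2) * 1 - (B / C) * ((0 * D1 z - 1 * (k * (B * u z))) / (D1 z * D1 z)))) (at z)"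
    unfolding H_def by (intro DERIV_diff DERIV_cmult DERIV_ident) (rule dq)
  have e0: "- (A^2) * 1 - (B / C) * ((0 * D1 z - 1 * (k * (B * u z))) / (D1 z * D1 z)) = - (A^2) + (B / C) * (k * (B * u z)) / (D1 z)^2"
    by (simp add: power2_eq_square)
  have "(H has_field_derivative - (A^2) + (B / C) * (k * (B * u z)) / (D1 z)^2) (at z)"
    unfolding e0[symmetric] by (rule dH0)
  moreover have "- (A^2) + (B / C) * (k * (B * u z)) / (D1 z)^2 = Ft0 z * deriv Gt0 z"
    unfolding derivGt0[OF z] Ft0_eq[OF z] Fx_def Mx_def D1_def D2_def D3_def
    using alg_h[OF b_sqC A0 C0, of k "u z" "exp z"] z unfolding U0_def D1_def D2_def
    by (simp add: mult.assoc)
  ultimately have "(H has_derivative (\<lambda>v. Ft0 z * deriv Gt0 z * v)) (at z)"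
    by (simp add: has_field_derivative_def)
  then have "((\<lambda>z. Re (H z)) has_derivative (\<lambda>v. Re (Ft0 z * deriv Gt0 z * v))) (at z)"
    using bounded_linear.has_derivative[OF bounded_linear_Re] by blast
  moreover have "(\<lambda>z. Re (H z)) = hh"
  proof
    fix w
    have bc: "B / C = complex_of_real (b / c)" by simp
    have "Re ((B / C) * (1 / D1 w)) = (b / c) * Re (1 / D1 w)"
      unfolding bc by (simp only: times_complex.sel Re_complex_of_real Im_complex_of_real mult_zero_left diff_0_right)
    then show "Re (H w) = hh w" unfolding H_def hh_def
      by (simp add: power2_eq_square)
  qed
  ultimately show ?thesis by simp
qed

definition "psiE z = (Gt0 z + cnj (Ft0 z), (cmod (Gt0 z))\<^sup>2 / 2 - (cmod (Ft0 z))\<^sup>2 / 2 + Re (Gt0 z * Ft0 z) - 2 * hh z)"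

lemma iam_psiE: "iam_map U0 Gt0 Ft0 psiE"
  unfolding iam_map_def using U0_open holGt0 holFt0 dhh
  by (intro conjI exI[of _ hh]) (auto simp: psiE_def)


end


context sett begin
definition "Pj j = of_int j * complex_of_real (2 * real m * pi) * \<i>"

lemma Bm1: "- 1 \<noteq> B"
proof
  assume "- 1 = B"
  then have "complex_of_real (-1) = complex_of_real b" by simp
  then have "b = -1" by (simp only: of_real_eq_iff)
  then show False using b_pos by simp
qed

lemma bm: "b * real m = real n" using b_rat m by simp

lemma exp_Pj: "exp (Pj j) = 1"
  unfolding exp_eq_1 Pj_def by (auto intro!: exI[of _ "j * int m"] simp: algebra_simps)

lemma exp_BPj: "exp (B * Pj j) = 1"
proof -
  have "Im (B * Pj j) = real_of_int (2 * (j * int n)) * pi"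
    unfolding Pj_def using bm by (simp add: algebra_simps)
  moreover have "Re (B * Pj j) = 0" unfolding Pj_def by simp
  ultimately show ?thesis unfolding exp_eq_1 by blast
qed

lemma u_shift: "u (z + Pj j) = u z"
  unfolding u_def by (simp add: distrib_left exp_add exp_BPj)

lemma exp_shift: "exp (z + Pj j) = exp z" by (simp add: exp_add exp_Pj)

lemma expm_shift: "exp (- (z + Pj j)) = exp (- z)"
  by (simp add: exp_diff exp_Pj)

lemma Re_shift: "Re (z + Pj j) = Re z" unfolding Pj_def by simp

lemma D1_shift: "D1 (z + Pj j) = D1 z" unfolding D1_def u_shift ..
lemma D2_shift: "D2 (z + Pj j) = D2 z" unfolding D2_def u_shift ..
lemma U0_shift: "z + Pj j \<in> U0 \<longleftrightarrow> z \<in> U0" unfolding U0_def by (simp add: D1_shift D2_shift)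

lemma Gt0_shift: "Gt0 (z + Pj j) = Gt0 z"
  using u_shift[of z j] exp_shift[of z j] unfolding Gt0_def u_def by simp

lemma Ft0_shift: "Ft0 (z + Pj j) = Ft0 z"
  using u_shift[of z j] exp_shift[of z j] expm_shift[of z j] unfolding Ft0_def u_def by simp

lemma hh_shift: "hh (z + Pj j) = hh z"
  unfolding hh_def Re_shift D1_shift ..

lemma count_u: "w \<noteq> 0 \<Longrightarrow> countable {z. u z = w}"
proof -
  assume w: "w \<noteq> 0"
  have "{z. u z = w} \<subseteq> (\<lambda>n::int. (Ln w + complex_of_real (real_of_int (2 * n) * pi) * \<i>) / B) ` UNIV"
  proof
    fix z assume "z \<in> {z. u z = w}"
    then have "exp (B * z) = exp (Ln w)" using w by (simp add: u_def)
    then obtain n :: int where "B * z = Ln w + complex_of_real (real_of_int (2 * n) * pi) * \<i>"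
      unfolding exp_eq by blast
    then have "z = (Ln w + complex_of_real (real_of_int (2 * n) * pi) * \<i>) / B"
      using B0 by (simp add: field_simps)
    then show "z \<in> (\<lambda>n::int. (Ln w + complex_of_real (real_of_int (2 * n) * pi) * \<i>) / B) ` UNIV" by blast
  qed
  moreover have "countable ((\<lambda>n::int. (Ln w + complex_of_real (real_of_int (2 * n) * pi) * \<i>) / B) ` UNIV)"
    by simp
  ultimately show ?thesis by (rule countable_subset)
qed

lemma D1_zero: "D1 z = 0 \<longleftrightarrow> u z = - 1 / k"
proof -
  have "D1 z = 0 \<longleftrightarrow> k * u z = - 1" unfolding D1_def by (simp add: add_eq_0_iff)
  also have "\<dots> \<longleftrightarrow> u z = - 1 / k" using k by (auto simp: field_simps)
  finally show ?thesis .
qed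

lemma D2_zero: "D2 z = 0 \<longleftrightarrow> u z = - (1 + B) / ((1 - B) * k)"
proof -
  have "D2 z = 0 \<longleftrightarrow> (1 - B) * k * u z = - (1 + B)" unfolding D2_def by (simp add: add_eq_0_iff algebra_simps)
  also have "\<dots> \<longleftrightarrow> u z = - (1 + B) / ((1 - B) * k)" using k B1 by (auto simp: field_simps)
  finally show ?thesis .
qed

lemma countable_compl: "countable (- U0)"
proof -
  have "- U0 \<subseteq> {z. u z = - 1 / k} \<union> {z. u z = - (1 + B) / ((1 - B) * k)}"
    unfolding U0_def using D1_zero D2_zero by auto
  moreover have "countable {z. u z = - 1 / k}" using k by (intro count_u) simp
  moreover have "countable {z. u z = - (1 + B) / ((1 - B) * k)}" using k B1 B1' Bm1 by (intro count_u) (simp add: divide_eq_0_iff)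
  ultimately show ?thesis by (meson countable_Un countable_subset)
qed

lemma U0_connected: "connected U0"
proof -
  have "connected (UNIV - (- U0))"
    by (rule connected_open_diff_countable[OF _ open_UNIV connected_UNIV countable_compl]) simp
  then show ?thesis by (simp add: Diff_eq)
qed

lemma h_unique:
  assumes "iam_map U0 Gt0 Ft0 \<psi>"
  shows "\<exists>K0. \<forall>z\<in>U0. \<psi> z = (Gt0 z + cnj (Ft0 z),
            (cmod (Gt0 z))\<^sup>2 / 2 - (cmod (Ft0 z))\<^sup>2 / 2 + Re (Gt0 z * Ft0 z) - 2 * (hh z + K0))"
proof -
  obtain h :: "complex \<Rightarrow> real" where hd: "\<And>z. z \<in> U0 \<Longrightarrow> (h has_derivative (\<lambda>v. Re (Ft0 z * deriv Gt0 z * v))) (at z)"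
    and hp: "\<And>z. z \<in> U0 \<Longrightarrow> \<psi> z = (Gt0 z + cnj (Ft0 z),
                         (cmod (Gt0 z))\<^sup>2 / 2 - (cmod (Ft0 z))\<^sup>2 / 2 + Re (Gt0 z * Ft0 z) - 2 * h z)"
    using assms unfolding iam_map_def by blast
  define f where "f z = h z - hh z" for z
  have fd: "\<And>z. z \<in> U0 \<Longrightarrow> (f has_derivative (\<lambda>v. 0)) (at z)"
  proof -
    fix z assume z: "z \<in> U0"
    have "(f has_derivative (\<lambda>v. Re (Ft0 z * deriv Gt0 z * v) - Re (Ft0 z * deriv Gt0 z * v))) (at z)"
      unfolding f_def by (rule has_derivative_diff[OF hd[OF z] dhh[OF z]])
    then show "(f has_derivative (\<lambda>v. 0)) (at z)" by simp
  qed
  have "continuous_on U0 f"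
    by (rule continuous_at_imp_continuous_on) (use fd has_derivative_continuous in blast)
  moreover have "\<forall>x\<in>U0 - {}. (f has_derivative (\<lambda>h. 0)) (at x within U0)"
    using fd at_within_open[OF _ U0_open] by simp
  ultimately have "f constant_on U0"
    by (rule has_derivative_zero_connected_constant_on[OF U0_connected U0_open finite.emptyI])
  then obtain K0 where K0: "\<And>z. z \<in> U0 \<Longrightarrow> f z = K0" unfolding constant_on_def by blast
  show ?thesis
  proof (intro exI[of _ K0] ballI)
    fix z assume z: "z \<in> U0"
    have "h z = hh z + K0" using K0[OF z] unfolding f_def by simp
    then show "\<psi> z = (Gt0 z + cnj (Ft0 z),
            (cmod (Gt0 z))\<^sup>2 / 2 - (cmod (Ft0 z))\<^sup>2 / 2 + Re (Gt0 z * Ft0 z) - 2 * (hh z + K0))"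
      using hp[OF z] by simp
  qed
qed

end

context sett begin

definition "Xq z = exp (Re z) * (cmod (D2 z))^2"
definition "Yq z = 4 * a^2 * \<bar>c\<bar> * (cmod (D1 z))^2"
definition "Q z = Xq z - Yq z"

lemma normdG: "z \<in> U0 \<Longrightarrow> cmod (deriv Gt0 z) = \<bar>a\<bar> * Xq z / Yq z"
proof -
  assume z: "z \<in> U0"
  then have d1: "cmod (D1 z) > 0" unfolding U0_def by simp
  have "cmod (deriv Gt0 z) = exp (Re z) * (cmod (D2 z))^2 / (4 * \<bar>a\<bar> * \<bar>c\<bar> * (cmod (D1 z))^2)"
    unfolding derivGt0[OF z] by (simp add: norm_mult norm_divide norm_power norm_exp_eq_Re)
  also have "\<dots> = \<bar>a\<bar> * Xq z / Yq z" unfolding Xq_def Yq_def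
    using a c d1 by (simp add: field_simps power2_eq_square abs_mult_self_eq)
  finally show ?thesis .
qed

lemma normdF: "z \<in> U0 \<Longrightarrow> cmod (deriv Ft0 z) = \<bar>a\<bar> * Yq z / Xq z"
proof -
  assume z: "z \<in> U0"
  then have d2: "cmod (D2 z) > 0" unfolding U0_def by simp
  have "cmod (deriv Ft0 z) = 4 * \<bar>a\<bar>^3 * \<bar>c\<bar> * (cmod (D1 z))^2 / (exp (Re z) * (cmod (D2 z))^2)"
    unfolding derivFt0[OF z] by (simp add: norm_mult norm_divide norm_power norm_exp_eq_Re)
  also have "\<dots> = \<bar>a\<bar> * Yq z / Xq z" unfolding Xq_def Yq_def
    using a c d2 by (simp add: field_simps power2_eq_square power3_eq_cube abs_mult_self_eq)
  finally show ?thesis .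
qed

lemma Xq_pos: "D2 z \<noteq> 0 \<Longrightarrow> Xq z > 0" unfolding Xq_def by simp
lemma Yq_pos: "D1 z \<noteq> 0 \<Longrightarrow> Yq z > 0" unfolding Yq_def using a c by simp

lemma D1_zero_D2: "D1 z = 0 \<Longrightarrow> D2 z = 2 * B"
proof -
  assume "D1 z = 0"
  then have "k * u z = -1" unfolding D1_def by (simp add: add_eq_0_iff)
  moreover have "D2 z = 1 + B + (1 - B) * (k * u z)" by (simp add: D2_def mult.assoc)
  ultimately show ?thesis by simp
qed

lemma Q_U0: "Q z = 0 \<Longrightarrow> z \<in> U0"
proof (rule ccontr)
  assume q: "Q z = 0" and nz: "z \<notin> U0"
  show False
  proof (cases "D1 z = 0")
    case True
    then have "D2 z \<noteq> 0" using D1_zero_D2 B0 by simp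
    then have "Xq z > 0" by (rule Xq_pos)
    moreover have "Yq z = 0" using True unfolding Yq_def by simp
    ultimately show False using q Q_def by simp
  next
    case False
    then have "D2 z = 0" using nz U0_def by simp
    then have "Xq z = 0" unfolding Xq_def by simp
    moreover have "Yq z > 0" using False by (rule Yq_pos)
    ultimately show False using q Q_def by simp
  qed
qed

lemma sing_eq: "singular_set U0 Gt0 Ft0 = {z. Q z = 0}"
proof (intro set_eqI iffI)
  fix z assume "z \<in> singular_set U0 Gt0 Ft0"
  then have z: "z \<in> U0" and e: "cmod (deriv Gt0 z) = cmod (deriv Ft0 z)" unfolding singular_set_def by auto
  have X: "Xq z > 0" and Y: "Yq z > 0" using z Xq_pos Yq_pos unfolding U0_def by auto
  have "\<bar>a\<bar> * Xq z / Yq z = \<bar>a\<bar> * Yq z / Xq z" using e normdG[OF z] normdF[OF z] by simp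
  then have "Xq z * Xq z = Yq z * Yq z" using X Y a by (simp add: field_simps)
  then have "Xq z = Yq z" using X Y by (metis abs_of_pos abs_mult_self_eq real_sqrt_abs2 )
  then show "z \<in> {z. Q z = 0}" unfolding Q_def by simp
next
  fix z assume "z \<in> {z. Q z = 0}"
  then have q: "Q z = 0" by simp
  then have z: "z \<in> U0" by (rule Q_U0)
  have "Xq z = Yq z" using q Q_def by simp
  then have "cmod (deriv Gt0 z) = cmod (deriv Ft0 z)" using normdG[OF z] normdF[OF z] by simp
  then show "z \<in> singular_set U0 Gt0 Ft0" unfolding singular_set_def using z by simp
qed

lemma Q_shift: "Q (z + Pj j) = Q z"
  unfolding Q_def Xq_def Yq_def Re_shift D1_shift D2_shift ..

lemma cont_Q: "continuous_on UNIV Q"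
  unfolding Q_def Xq_def Yq_def D1_def D2_def u_def by (intro continuous_intros)

lemma norm_u: "cmod (u z) = exp (b * Re z)"
  unfolding u_def by (simp add: norm_exp_eq_Re)


lemma right_bound: "\<exists>L. \<forall>z. L \<le> Re z \<longrightarrow> Q z > 0"
proof -
  define \<alpha> where "\<alpha> = \<bar>1 - b\<bar> * cmod k"
  define \<beta> where "\<beta> = 1 + b"
  define \<gamma> where "\<gamma> = 4 * a^2 * \<bar>c\<bar>"
  define \<delta> where "\<delta> = cmod k"
  have pos: "\<alpha> > 0" "\<beta> > 0" "\<gamma> > 0" "\<delta> > 0" "b > 0"
    unfolding \<alpha>_def \<beta>_def \<gamma>_def \<delta>_def using b_pos b1 k a c by auto
  have l1: "filterlim (\<lambda>x::real. exp x * (\<alpha> - \<beta> * exp (-b*x))^2 - \<gamma> * (exp (-b*x) + \<delta>)^2) at_top at_top"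
    using pos by real_asymp
  have l2: "((\<lambda>x::real. \<alpha> - \<beta> * exp (-b*x)) \<longlongrightarrow> \<alpha>) at_top"
    using pos by real_asymp
  have "eventually (\<lambda>x. 0 < exp x * (\<alpha> - \<beta> * exp (-b*x))^2 - \<gamma> * (exp (-b*x) + \<delta>)^2) at_top"
    using l1[unfolded filterlim_at_top_dense, rule_format, of 0] .
  moreover have "eventually (\<lambda>x. 0 < \<alpha> - \<beta> * exp (-b*x)) at_top"
    using order_tendstoD(1)[OF l2 pos(1)] .
  ultimately have "eventually (\<lambda>x. 0 < exp x * (\<alpha> - \<beta> * exp (-b*x))^2 - \<gamma> * (exp (-b*x) + \<delta>)^2
      \<and> 0 < \<alpha> - \<beta> * exp (-b*x)) at_top" by eventually_elim simp
  then obtain L where L: "\<And>x. x \<ge> L \<Longrightarrow> 0 < exp x * (\<alpha> - \<beta> * exp (-b*x))^2 - \<gamma> * (exp (-b*x) + \<delta>)^2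
      \<and> 0 < \<alpha> - \<beta> * exp (-b*x)" unfolding eventually_at_top_linorder by blast
  show ?thesis
  proof (intro exI[of _ L] allI impI)
    fix z assume zL: "L \<le> Re z"
    define x where "x = Re z"
    define s where "s = exp (b * x)"
    define t where "t = exp (-b * x)"
    have st: "s * t = 1" unfolding s_def t_def by (simp add: exp_minus field_simps)
    have sp: "s > 0" unfolding s_def by simp
    have Lx: "0 < exp x * (\<alpha> - \<beta> * t)^2 - \<gamma> * (t + \<delta>)^2" "0 < \<alpha> - \<beta> * t"
      using L[of x] zL unfolding x_def t_def by auto
    have nu: "cmod (u z) = s" unfolding s_def x_def norm_u ..
    have "cmod ((1 - B) * k * u z) = \<alpha> * s"
    proof -
      have "cmod (1 - B) = \<bar>1 - b\<bar>" by (metis norm_of_real of_real_1 of_real_diff)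
      then show ?thesis unfolding \<alpha>_def by (simp add: norm_mult nu)
    qed
    moreover have "cmod (1 + B) = \<beta>" unfolding \<beta>_def using b_pos
      by (metis abs_of_pos add_pos_pos norm_of_real of_real_1 of_real_add zero_less_one)
    moreover have "cmod ((1 - B) * k * u z) - cmod (1 + B) \<le> cmod (D2 z)"
      unfolding D2_def by (metis add.commute norm_diff_ineq)
    ultimately have d2: "\<alpha> * s - \<beta> \<le> cmod (D2 z)" by simp
    have "\<alpha> * s - \<beta> = s * (\<alpha> - \<beta> * t)" using st by (simp add: algebra_simps)
    then have d2p: "\<alpha> * s - \<beta> > 0" using Lx sp by simp
    have d1: "cmod (D1 z) \<le> 1 + \<delta> * s"
    proof -
      have "cmod (D1 z) \<le> cmod (1::complex) + cmod (k * u z)" unfolding D1_def by (rule norm_triangle_ineq)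
      then show ?thesis unfolding \<delta>_def by (simp add: norm_mult nu)
    qed
    have "(\<alpha> * s - \<beta>)^2 \<le> (cmod (D2 z))^2" using d2 d2p by (simp add: power_mono)
    then have i1: "exp x * (\<alpha> * s - \<beta>)^2 \<le> exp x * (cmod (D2 z))^2" by (rule mult_left_mono) simp
    have "(cmod (D1 z))^2 \<le> (1 + \<delta> * s)^2" using d1 by (simp add: power_mono)
    then have i2: "\<gamma> * (cmod (D1 z))^2 \<le> \<gamma> * (1 + \<delta> * s)^2" by (rule mult_left_mono) (use pos in simp)
    have "exp x * (\<alpha> * s - \<beta>)^2 - \<gamma> * (1 + \<delta> * s)^2 \<le> Q z"
      unfolding Q_def Xq_def Yq_def x_def[symmetric] \<gamma>_def[symmetric] using i1 i2 by linarith
    moreover have "exp x * (\<alpha> * s - \<beta>)^2 - \<gamma> * (1 + \<delta> * s)^2 = s^2 * (exp x * (\<alpha> - \<beta> * t)^2 - \<gamma> * (t + \<delta>)^2)"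
    proof -
      have e1: "\<alpha> * s - \<beta> = s * (\<alpha> - \<beta> * t)" and e2: "1 + \<delta> * s = s * (t + \<delta>)" using st by (simp_all add: algebra_simps)
      show ?thesis unfolding e1 e2 by algebra
    qed
    moreover have "s^2 * (exp x * (\<alpha> - \<beta> * t)^2 - \<gamma> * (t + \<delta>)^2) > 0" using sp Lx by simp
    ultimately show "Q z > 0" by linarith
  qed
qed

lemma left_bound: "\<exists>L. \<forall>z. Re z \<le> L \<longrightarrow> Q z < 0"
proof -
  define \<alpha> where "\<alpha> = \<bar>1 - b\<bar> * cmod k"
  define \<beta> where "\<beta> = 1 + b"
  define \<gamma> where "\<gamma> = 4 * a^2 * \<bar>c\<bar>"
  define \<delta> where "\<delta> = cmod k"
  have pos: "\<alpha> > 0" "\<beta> > 0" "\<gamma> > 0" "\<delta> > 0" "b > 0"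
    unfolding \<alpha>_def \<beta>_def \<gamma>_def \<delta>_def using b_pos b1 k a c by auto
  have l1: "((\<lambda>x::real. exp x * (\<beta> + \<alpha> * exp (b*x))^2 - \<gamma> * (1 - \<delta> * exp (b*x))^2) \<longlongrightarrow> -\<gamma>) at_bot"
    using pos by real_asymp
  have l2: "((\<lambda>x::real. 1 - \<delta> * exp (b*x)) \<longlongrightarrow> 1) at_bot"
    using pos by real_asymp
  have "eventually (\<lambda>x. exp x * (\<beta> + \<alpha> * exp (b*x))^2 - \<gamma> * (1 - \<delta> * exp (b*x))^2 < 0) at_bot"
    using order_tendstoD(2)[OF l1, of 0] pos(3) by simp
  moreover have "eventually (\<lambda>x. 0 < 1 - \<delta> * exp (b*x)) at_bot"
    using order_tendstoD(1)[OF l2, of 0] by simp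
  ultimately have "eventually (\<lambda>x. exp x * (\<beta> + \<alpha> * exp (b*x))^2 - \<gamma> * (1 - \<delta> * exp (b*x))^2 < 0
      \<and> 0 < 1 - \<delta> * exp (b*x)) at_bot" by eventually_elim simp
  then obtain L where L: "\<And>x. x \<le> L \<Longrightarrow> exp x * (\<beta> + \<alpha> * exp (b*x))^2 - \<gamma> * (1 - \<delta> * exp (b*x))^2 < 0
      \<and> 0 < 1 - \<delta> * exp (b*x)" unfolding eventually_at_bot_linorder by blast
  show ?thesis
  proof (intro exI[of _ L] allI impI)
    fix z assume zL: "Re z \<le> L"
    define x where "x = Re z"
    define s where "s = exp (b * x)"
    have Lx: "exp x * (\<beta> + \<alpha> * s)^2 - \<gamma> * (1 - \<delta> * s)^2 < 0" "0 < 1 - \<delta> * s"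
      using L[of x] zL unfolding x_def s_def by auto
    have nu: "cmod (u z) = s" unfolding s_def x_def norm_u ..
    have "cmod ((1 - B) * k * u z) = \<alpha> * s"
    proof -
      have "cmod (1 - B) = \<bar>1 - b\<bar>" by (metis norm_of_real of_real_1 of_real_diff)
      then show ?thesis unfolding \<alpha>_def by (simp add: norm_mult nu)
    qed
    moreover have "cmod (1 + B) = \<beta>" unfolding \<beta>_def using b_pos
      by (metis abs_of_pos add_pos_pos norm_of_real of_real_1 of_real_add zero_less_one)
    moreover have "cmod (D2 z) \<le> cmod (1 + B) + cmod ((1 - B) * k * u z)"
      unfolding D2_def by (metis norm_triangle_ineq add.assoc)
    ultimately have d2: "cmod (D2 z) \<le> \<beta> + \<alpha> * s" by simp
    have d1: "1 - \<delta> * s \<le> cmod (D1 z)"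
    proof -
      have "cmod (1::complex) - cmod (k * u z) \<le> cmod (D1 z)" unfolding D1_def
        by (metis norm_diff_ineq)
      then show ?thesis unfolding \<delta>_def by (simp add: norm_mult nu)
    qed
    have "(cmod (D2 z))^2 \<le> (\<beta> + \<alpha> * s)^2" using d2 by (simp add: power_mono)
    then have i1: "exp x * (cmod (D2 z))^2 \<le> exp x * (\<beta> + \<alpha> * s)^2" by (rule mult_left_mono) simp
    have "(1 - \<delta> * s)^2 \<le> (cmod (D1 z))^2" using d1 Lx by (simp add: power_mono)
    then have i2: "\<gamma> * (1 - \<delta> * s)^2 \<le> \<gamma> * (cmod (D1 z))^2" by (rule mult_left_mono) (use pos in simp)
    have "Q z \<le> exp x * (\<beta> + \<alpha> * s)^2 - \<gamma> * (1 - \<delta> * s)^2"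
      unfolding Q_def Xq_def Yq_def x_def[symmetric] \<gamma>_def[symmetric] using i1 i2 by linarith
    then show "Q z < 0" using Lx by linarith
  qed
qed


lemma sing_cover: "\<exists>K. compact K \<and> K \<subseteq> U0 \<and>
  singular_set U0 Gt0 Ft0 \<subseteq> (\<Union>j::int. (\<lambda>z. z + of_int j * complex_of_real (2 * real m * pi) * \<i>) ` K)"
proof -
  obtain L1 where L1: "\<And>z. L1 \<le> Re z \<Longrightarrow> Q z > 0" using right_bound by blast
  obtain L2 where L2: "\<And>z. Re z \<le> L2 \<Longrightarrow> Q z < 0" using left_bound by blast
  define T where "T = 2 * real m * pi"
  have T: "T > 0" unfolding T_def using m by simp
  define K where "K = {z. Q z = 0 \<and> L2 \<le> Re z \<and> Re z \<le> L1 \<and> 0 \<le> Im z \<and> Im z \<le> T}"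
  have cQ: "continuous_on UNIV Q" by (rule cont_Q)
  have "closed {z. Q z = 0}" using cQ by (intro closed_Collect_eq) (auto intro: continuous_intros)
  moreover have "closed {z. L2 \<le> Re z \<and> Re z \<le> L1 \<and> 0 \<le> Im z \<and> Im z \<le> T}"
    by (intro closed_Collect_conj closed_Collect_le continuous_intros)
  ultimately have cK: "closed K" unfolding K_def by (simp add: Collect_conj_eq closed_Int)
  have "K \<subseteq> cball 0 (\<bar>L1\<bar> + \<bar>L2\<bar> + T)"
  proof
    fix z assume z: "z \<in> K"
    have "cmod z \<le> \<bar>Re z\<bar> + \<bar>Im z\<bar>" by (rule cmod_le)
    moreover have "\<bar>Re z\<bar> \<le> \<bar>L1\<bar> + \<bar>L2\<bar>" "\<bar>Im z\<bar> \<le> T" using z unfolding K_def by auto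
    ultimately show "z \<in> cball 0 (\<bar>L1\<bar> + \<bar>L2\<bar> + T)" by simp
  qed
  then have "bounded K" using bounded_cball bounded_subset by blast
  then have compK: "compact K" using cK by (simp add: compact_eq_bounded_closed)
  have KU: "K \<subseteq> U0" unfolding K_def using Q_U0 by auto
  have cover: "singular_set U0 Gt0 Ft0 \<subseteq> (\<Union>j::int. (\<lambda>z. z + of_int j * complex_of_real (2 * real m * pi) * \<i>) ` K)"
  proof
    fix z assume "z \<in> singular_set U0 Gt0 Ft0"
    then have q: "Q z = 0" unfolding sing_eq by simp
    define j where "j = \<lfloor>Im z / T\<rfloor>"
    define z' where "z' = z + Pj (- j)"
    have q': "Q z' = 0" unfolding z'_def Q_shift q ..
    have re: "Re z' = Re z" unfolding z'_def Re_shift ..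
    have im: "Im z' = Im z - of_int j * T" unfolding z'_def Pj_def T_def by simp
    have "of_int j \<le> Im z / T" "Im z / T < of_int j + 1" unfolding j_def by linarith+
    then have "of_int j * T \<le> Im z" "Im z < (of_int j + 1) * T" using T by (simp_all add: field_simps)
    then have i1: "0 \<le> Im z'" and i2: "Im z' \<le> T" unfolding im by (simp_all add: algebra_simps)
    have "L2 < Re z" using L2[of z] q by force
    moreover have "Re z < L1" using L1[of z] q by force
    ultimately have "z' \<in> K" unfolding K_def using q' re i1 i2 by simp
    moreover have "z = z' + of_int j * complex_of_real (2 * real m * pi) * \<i>"
      unfolding z'_def Pj_def by (simp add: algebra_simps)
    ultimately show "z \<in> (\<Union>j::int. (\<lambda>z. z + of_int j * complex_of_real (2 * real m * pi) * \<i>) ` K)" by blast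
  qed
  show ?thesis using compK KU cover by blast
qed

end

context sett begin

definition "L1w = Ln (- 1 / k)"
definition "L2w = Ln (- (1 + B) / ((1 - B) * k))"
definition "pA (j::nat) = (L1w + complex_of_real (2 * pi * real j) * \<i>) / B"
definition "pB (j::nat) = (L2w + complex_of_real (2 * pi * real j) * \<i>) / B"
definition "EE = pA ` {..<n} \<union> pB ` {..<n}"

lemma n_pos: "n > 0"
proof -
  have "real n > 0" using b_pos b_rat m by (simp add: zero_less_divide_iff)
  then show ?thesis by simp
qed

lemma w1_nz: "- 1 / k \<noteq> 0" using k by simp
lemma w2_nz: "- (1 + B) / ((1 - B) * k) \<noteq> 0" using k B1 Bm1 by (simp add: divide_eq_0_iff)

lemma exp_2pij: "exp (L + complex_of_real (2 * pi * real j) * \<i>) = exp L"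
proof -
  have "exp (complex_of_real (2 * pi * real j) * \<i>) = 1"
    unfolding exp_eq_1 by (auto intro!: exI[of _ "int j"])
  then show ?thesis by (simp add: exp_add)
qed

lemma B_pA: "B * pA j = L1w + complex_of_real (2 * pi * real j) * \<i>"
  unfolding pA_def using B0 by simp
lemma B_pB: "B * pB j = L2w + complex_of_real (2 * pi * real j) * \<i>"
  unfolding pB_def using B0 by simp

lemma u_pA: "u (pA j) = - 1 / k"
  unfolding u_def B_pA exp_2pij L1w_def using w1_nz by simp
lemma u_pB: "u (pB j) = - (1 + B) / ((1 - B) * k)"
  unfolding u_def B_pB exp_2pij L2w_def using w2_nz by simp

lemma D1_pA: "D1 (pA j) = 0" using D1_zero u_pA by simp
lemma D2_pB: "D2 (pB j) = 0" using D2_zero u_pB by simp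
lemma D1_pB: "D1 (pB j) \<noteq> 0" using D1_zero_D2 D2_pB B0 by force
lemma D2_pA: "D2 (pA j) \<noteq> 0" using D1_zero_D2 D1_pA B0 by simp

lemma pA_inj: "inj pA"
proof (rule injI)
  fix x y assume "pA x = pA y"
  then have "B * pA x = B * pA y" by simp
  then have "complex_of_real (2 * pi * real x) = complex_of_real (2 * pi * real y)"
    unfolding B_pA by simp
  then show "x = y" by (simp only: of_real_eq_iff) simp
qed

lemma pB_inj: "inj pB"
proof (rule injI)
  fix x y assume "pB x = pB y"
  then have "B * pB x = B * pB y" by simp
  then have "complex_of_real (2 * pi * real x) = complex_of_real (2 * pi * real y)"
    unfolding B_pB by simp
  then show "x = y" by (simp only: of_real_eq_iff) simp
qed

lemma EE_finite: "finite EE" unfolding EE_def by simp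

lemma EE_card: "card EE = 2 * n"
proof -
  have dis: "pA ` {..<n} \<inter> pB ` {..<n} = {}"
  proof (rule ccontr)
    assume "pA ` {..<n} \<inter> pB ` {..<n} \<noteq> {}"
    then obtain x y where "pA x = pB y" by blast
    then have "D1 (pA x) = D1 (pB y)" by simp
    then show False using D1_pA D1_pB by simp
  qed
  have "card EE = card (pA ` {..<n}) + card (pB ` {..<n})"
    unfolding EE_def by (rule card_Un_disjoint) (use dis in auto)
  also have "\<dots> = n + n" using card_image[OF inj_on_subset[OF pA_inj]] card_image[OF inj_on_subset[OF pB_inj]] by simp
  finally show ?thesis by simp
qed

lemma EE_sub: "EE \<subseteq> - U0"
  unfolding EE_def U0_def using D1_pA D2_pB by auto

lemma Im_BPj: "Im (B * Pj l) = 2 * pi * (of_int l * real n)"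
  unfolding Pj_def using bm by (simp add: algebra_simps)

lemma shift_same:
  assumes j: "j < n" and j': "j' < n" and e: "B * p = B * q + B * Pj l"
    and p: "Im (B * p) = c0 + 2 * pi * real j" and q: "Im (B * q) = c0 + 2 * pi * real j'"
  shows "l = 0"
proof -
  have "2 * pi * real j = 2 * pi * real j' + 2 * pi * (of_int l * real n)"
    using arg_cong[OF e, of Im] p q Im_BPj by simp
  then have "(2 * pi) * real j = (2 * pi) * (real j' + of_int l * real n)" by (simp add: algebra_simps)
  then have "real j = real j' + of_int l * real n" using mult_left_cancel[of "2 * pi"] by simp
  then have "real_of_int (int j) = real_of_int (int j' + l * int n)" by simp
  then have "int j = int j' + l * int n" by (simp only: of_int_eq_iff)
  then have e2: "int j = int j' + l * int n" .
  show "l = 0"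
  proof (rule ccontr)
    assume "l \<noteq> 0"
    then have "l \<ge> 1 \<or> l \<le> -1" by linarith
    then show False
    proof
      assume "l \<ge> 1"
      then have "l * int n \<ge> 1 * int n" by (intro mult_right_mono) auto
      then show False using e2 j by linarith
    next
      assume "l \<le> -1"
      then have "l * int n \<le> (-1) * int n" by (intro mult_right_mono) auto
      then show False using e2 j' by linarith
    qed
  qed
qed

lemma EE_mod: "p \<in> EE \<Longrightarrow> q \<in> EE \<Longrightarrow> p = q + of_int l * complex_of_real (2 * real m * pi) * \<i> \<Longrightarrow> p = q"
proof -
  assume pE: "p \<in> EE" and qE: "q \<in> EE" and e0: "p = q + of_int l * complex_of_real (2 * real m * pi) * \<i>"
  have e: "p = q + Pj l" using e0 unfolding Pj_def by simp
  then have d1: "D1 p = D1 q" and d2: "D2 p = D2 q" using D1_shift D2_shift by auto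
  have eB: "B * p = B * q + B * Pj l" using e by (simp add: algebra_simps)
  from pE show "p = q"
    unfolding EE_def
  proof
    assume "p \<in> pA ` {..<n}"
    then obtain j where j: "j < n" "p = pA j" by auto
    then have "D1 q = 0" using d1 D1_pA by simp
    then have "q \<in> pA ` {..<n}" using qE unfolding EE_def using D1_pB by auto
    then obtain j' where j': "j' < n" "q = pA j'" by auto
    have "l = 0" by (rule shift_same[OF j(1) j'(1) eB]) (simp_all add: j j' B_pA)
    then show "p = q" using e unfolding Pj_def by simp
  next
    assume "p \<in> pB ` {..<n}"
    then obtain j where j: "j < n" "p = pB j" by auto
    then have "D2 q = 0" using d2 D2_pB by simp
    then have "q \<in> pB ` {..<n}" using qE unfolding EE_def using D2_pA by auto
    then obtain j' where j': "j' < n" "q = pB j'" by auto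
    have "l = 0" by (rule shift_same[OF j(1) j'(1) eB]) (simp_all add: j j' B_pB)
    then show "p = q" using e unfolding Pj_def by simp
  qed
qed

lemma div_split: "B \<noteq> 0 \<Longrightarrow> (Lw + (X + B * Y) * \<i>) / B = (Lw + X * \<i>) / B + Y * \<i>"
  by (simp add: field_simps)

lemma cover_gen:
  assumes w: "w \<noteq> 0" and uq: "u q = w"
  shows "\<exists>j<n. \<exists>l::int. q = (Ln w + complex_of_real (2 * pi * real j) * \<i>) / B + of_int l * complex_of_real (2 * real m * pi) * \<i>"
proof -
  have "exp (B * q) = exp (Ln w)" using uq w unfolding u_def by simp
  then obtain N :: int where N: "B * q = Ln w + complex_of_real (real_of_int (2 * N) * pi) * \<i>"
    unfolding exp_eq by blast
  define j where "j = N mod int n"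
  define l where "l = N div int n"
  have j0: "0 \<le> j" "j < int n" unfolding j_def using n_pos by auto
  have Nj: "N = j + l * int n" unfolding j_def l_def by simp
  have r: "real (nat j) = of_int j" using j0 by simp
  have q1: "q = (Ln w + complex_of_real (real_of_int (2 * N) * pi) * \<i>) / B"
    using N B0 by (simp add: eq_divide_eq mult.commute)
  have re: "real_of_int (2 * N) * pi = 2 * pi * real (nat j) + b * (of_int l * (2 * real m * pi))"
    unfolding Nj r using bm by (simp add: algebra_simps)
  have "complex_of_real (real_of_int (2 * N) * pi) = complex_of_real (2 * pi * real (nat j)) + B * (of_int l * complex_of_real (2 * real m * pi))"
    unfolding re by simp
  then have "q = (Ln w + complex_of_real (2 * pi * real (nat j)) * \<i>) / B + (of_int l * complex_of_real (2 * real m * pi)) * \<i>"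
    unfolding q1 using div_split[OF B0] by simp
  moreover have "nat j < n" using j0 by simp
  ultimately show ?thesis by (metis mult.assoc)
qed

lemma EE_cover: "q \<notin> U0 \<Longrightarrow> \<exists>p\<in>EE. \<exists>l::int. q = p + of_int l * complex_of_real (2 * real m * pi) * \<i>"
proof -
  assume "q \<notin> U0"
  then have "D1 q = 0 \<or> D2 q = 0" unfolding U0_def by auto
  then show ?thesis
  proof
    assume "D1 q = 0"
    then have "u q = - 1 / k" using D1_zero by simp
    then obtain j l where "j < n" "q = pA j + of_int l * complex_of_real (2 * real m * pi) * \<i>"
      using cover_gen[OF w1_nz] unfolding pA_def L1w_def by blast
    then show ?thesis unfolding EE_def by blast
  next
    assume "D2 q = 0"
    then have "u q = - (1 + B) / ((1 - B) * k)" using D2_zero by simp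
    then obtain j l where "j < n" "q = pB j + of_int l * complex_of_real (2 * real m * pi) * \<i>"
      using cover_gen[OF w2_nz] unfolding pB_def L2w_def by blast
    then show ?thesis unfolding EE_def by blast
  qed
qed

end


lemma ident_A:
  fixes G F F0 :: complex and hz K0 :: real
  shows "(cmod G)\<^sup>2 / 2 - (cmod F)\<^sup>2 / 2 + Re (G * F) - 2 * (hz + K0) - (cmod (G + cnj F - 2 * cnj F0))\<^sup>2 / 2
     = - (cmod F)\<^sup>2 - 2 * (hz - Re (G * F0)) - 2 * K0 + 2 * Re (cnj F * F0) - 2 * (cmod F0)\<^sup>2"
  by (simp only: cmod_power2) (simp add: power2_eq_square field_simps)

lemma ident_B:
  fixes G F G0 :: complex and hz K0 :: real
  shows "(cmod G)\<^sup>2 / 2 - (cmod F)\<^sup>2 / 2 + Re (G * F) - 2 * (hz + K0) - (-1) * (cmod (G + cnj F - 2 * G0))\<^sup>2 / 2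
     = (cmod G)\<^sup>2 - 2 * Re (G * cnj G0) + 2 * (cmod G0)\<^sup>2 + 2 * Re (F * (G - G0)) - 2 * (hz + K0)"
  by (simp only: cmod_power2) (simp add: power2_eq_square field_simps)

lemma nonzero_near:
  fixes f :: "complex \<Rightarrow> complex"
  assumes "continuous_on UNIV f" "f p \<noteq> 0"
  shows "\<exists>r>0. \<forall>z\<in>ball p r. f z \<noteq> 0"
proof -
  have "isCont f p" using assms(1) by (simp add: continuous_on_eq_continuous_at)
  from continuous_at_avoid[OF this assms(2)] show ?thesis by (auto simp: dist_commute)
qed

context sett begin

lemma u_iso:
  assumes e: "u z = u p" and d: "dist z p < 2 * pi / b"
  shows "z = p"
proof -
  have "exp (B * z) = exp (B * p)" using e unfolding u_def .
  then obtain N :: int where N: "B * z = B * p + complex_of_real (real_of_int (2 * N) * pi) * \<i>"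
    unfolding exp_eq by blast
  then have "B * (z - p) = complex_of_real (real_of_int (2 * N) * pi) * \<i>" by (simp add: algebra_simps)
  then have "cmod (B * (z - p)) = \<bar>real_of_int (2 * N) * pi\<bar>" by (simp only: norm_mult norm_of_real norm_ii mult_1_right)
  also have "\<dots> = 2 * \<bar>real_of_int N\<bar> * pi" by (simp add: abs_mult)
  finally have "cmod (B * (z - p)) = 2 * \<bar>real_of_int N\<bar> * pi" .
  then have "b * dist z p = 2 * \<bar>real_of_int N\<bar> * pi" using b_pos pi_gt_zero by (simp add: norm_mult dist_norm abs_mult)
  moreover have "b * dist z p < 2 * pi" using d b_pos by (simp add: field_simps)
  ultimately have "\<bar>real_of_int N\<bar> < 1" by simp
  then have "N = 0" by linarith
  then show "z = p" using N B0 by simp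
qed

lemma holD1: "D1 holomorphic_on S" unfolding D1_def u_def by (intro holomorphic_intros)
lemma holD2: "D2 holomorphic_on S" unfolding D2_def u_def by (intro holomorphic_intros)
lemma holW: "W holomorphic_on S" unfolding W_def u_def by (intro holomorphic_intros) (use A0 C0 in auto)
lemma holMx: "Mx holomorphic_on S" unfolding Mx_def D3_def u_def by (intro holomorphic_intros) auto
lemma contD1: "continuous_on UNIV D1" by (rule holomorphic_on_imp_continuous_on[OF holD1])
lemma contD2: "continuous_on UNIV D2" by (rule holomorphic_on_imp_continuous_on[OF holD2])
lemma contW: "continuous_on UNIV W" by (rule holomorphic_on_imp_continuous_on[OF holW])
lemma contMx: "continuous_on UNIV Mx" by (rule holomorphic_on_imp_continuous_on[OF holMx])

lemma dD1: "(D1 has_field_derivative k * (B * u z)) (at z)"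
  unfolding D1_def u_def by (auto intro!: derivative_eq_intros)
lemma dD2: "(D2 has_field_derivative (1 - B) * k * (B * u z)) (at z)"
  unfolding D2_def u_def by (auto intro!: derivative_eq_intros)
lemma dW: "\<exists>w'. (W has_field_derivative w') (at z)"
  using holW[of UNIV] by (auto simp: holomorphic_on_open)
lemma dMx: "\<exists>w'. (Mx has_field_derivative w') (at z)"
  using holMx[of UNIV] by (auto simp: holomorphic_on_open)

lemma hh_Re: "hh z = Re (- (A^2) * z - (B / C) * (1 / D1 z))"
proof -
  have bc: "B / C = complex_of_real (b / c)" by simp
  have "Re ((B / C) * (1 / D1 z)) = (b / c) * Re (1 / D1 z)"
    unfolding bc by (simp only: times_complex.sel Re_complex_of_real Im_complex_of_real mult_zero_left diff_0_right)
  then show ?thesis unfolding hh_def by (simp add: power2_eq_square)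
qed

lemma U0_ball:
  assumes z: "z \<in> ball p r" "z \<noteq> p" and r: "r \<le> 2 * pi / b"
    and d: "\<forall>z\<in>ball p r. D2 z \<noteq> 0" and p: "D1 p = 0"
  shows "z \<in> U0"
proof -
  have "D1 z \<noteq> 0"
  proof
    assume "D1 z = 0"
    then have "u z = u p" using p D1_zero by simp
    moreover have "dist z p < 2 * pi / b" using z r by (simp add: dist_commute)
    ultimately show False using u_iso z by blast
  qed
  then show ?thesis using d z unfolding U0_def by auto
qed

lemma U0_ballB:
  assumes z: "z \<in> ball p r" "z \<noteq> p" and r: "r \<le> 2 * pi / b"
    and d: "\<forall>z\<in>ball p r. D1 z \<noteq> 0" and p: "D2 p = 0"
  shows "z \<in> U0"
proof -
  have "D2 z \<noteq> 0"
  proof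
    assume "D2 z = 0"
    then have "u z = u p" using p D2_zero by simp
    moreover have "dist z p < 2 * pi / b" using z r by (simp add: dist_commute)
    ultimately show False using u_iso z by blast
  qed
  then show ?thesis using d z unfolding U0_def by auto
qed


lemma Fx_lam: "Fx = (\<lambda>z. Mx z / D2 z)" unfolding Fx_def by (rule ext) simp
lemma Gx_lam: "Gx = (\<lambda>z. W z / D1 z)" unfolding Gx_def by (rule ext) simp

lemma endA:
  assumes pD: "D1 p = 0"
    and psi: "\<forall>z\<in>U0. \<psi> z = (Gt0 z + cnj (Ft0 z), (cmod (Gt0 z))\<^sup>2 / 2 - (cmod (Ft0 z))\<^sup>2 / 2 + Re (Gt0 z * Ft0 z) - 2 * (hh z + K0))"
  shows "complete_end U0 Gt0 Ft0 p \<and> embedded_end U0 \<psi> p \<and> end_revolution_type U0 \<psi> p"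
proof -
  have up: "k * u p = -1" using pD unfolding D1_def by (simp add: add_eq_0_iff)
  have D2p: "D2 p = 2 * B" using D1_zero_D2[OF pD] .
  have D2p0: "D2 p \<noteq> 0" using D2p B0 by simp
  have Wp: "W p = exp p * B / (A * C)"
  proof -
    have "(1 + B)^2 + (1 - B)^2 * k * u p = (1 + B)^2 - (1 - B)^2" using up by (simp add: mult.assoc)
    also have "\<dots> = 4 * B" by (simp add: power2_eq_square algebra_simps)
    finally show ?thesis unfolding W_def using A0 C0 by (simp add: field_simps)
  qed
  have Wp0: "W p \<noteq> 0" using Wp A0 C0 B0 by simp
  define F0 where "F0 = Fx p"
  have F0: "F0 = - A / exp p"
  proof -
    have "D3 p = (1 - B) + (1 + B) * (k * u p)" unfolding D3_def by (simp add: mult.assoc)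
    then have "D3 p = - 2 * B" using up by (simp add: algebra_simps)
    then show ?thesis unfolding F0_def Fx_def Mx_def D2p using B0 by (simp add: field_simps)
  qed
  obtain r1 where r1: "r1 > 0" "\<forall>z\<in>ball p r1. D2 z \<noteq> 0" using nonzero_near[OF contD2 D2p0] by blast
  obtain r2 where r2: "r2 > 0" "\<forall>z\<in>ball p r2. W z \<noteq> 0" using nonzero_near[OF contW Wp0] by blast
  define r0 where "r0 = min (min r1 r2) (2 * pi / b)"
  have r0: "r0 > 0" unfolding r0_def using r1 r2 b_pos by simp
  have D2b: "\<forall>z\<in>ball p r0. D2 z \<noteq> 0" using r1 unfolding r0_def by auto
  have Wb: "\<And>z. z \<in> ball p r0 \<Longrightarrow> W z \<noteq> 0" using r2 unfolding r0_def by auto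
  have inU: "\<And>z. z \<in> ball p r0 \<Longrightarrow> z \<noteq> p \<Longrightarrow> z \<in> U0"
    using U0_ball[OF _ _ _ D2b pD] unfolding r0_def by auto
  define \<Phi> where "\<Phi> z = D1 z / W z" for z
  have holPhi: "\<Phi> holomorphic_on ball p r0" unfolding \<Phi>_def
    by (rule holomorphic_on_divide[OF holD1 holW Wb])
  have Phip: "\<Phi> p = 0" unfolding \<Phi>_def pD by simp
  have dPhi: "deriv \<Phi> p \<noteq> 0"
  proof -
    obtain w' where w': "(W has_field_derivative w') (at p)" using dW by blast
    have "(\<Phi> has_field_derivative (k * (B * u p) * W p - D1 p * w') / (W p * W p)) (at p)"
      unfolding \<Phi>_def by (rule DERIV_divide[OF dD1 w' Wp0])
    then have "deriv \<Phi> p = (k * (B * u p) * W p - D1 p * w') / (W p * W p)" by (rule DERIV_imp_deriv)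
    also have "\<dots> = k * (B * u p) / W p" using pD Wp0 by (simp add: field_simps)
    also have "k * (B * u p) = B * (k * u p)" by (simp add: algebra_simps)
    also have "\<dots> = - B" using up by simp
    finally show ?thesis using B0 Wp0 by simp
  qed
  have holFx: "Fx holomorphic_on ball p r0" unfolding Fx_lam
    by (rule holomorphic_on_divide[OF holMx holD2]) (use D2b in auto)
  obtain \<rho> where \<rho>: "\<rho> > 0" "\<rho> \<le> r0" and Phinz: "\<forall>z\<in>ball p \<rho> - {p}. \<Phi> z \<noteq> 0"
    and injP: "\<forall>z1\<in>ball p \<rho> - {p}. \<forall>z2\<in>ball p \<rho> - {p}. cmod (1 / \<Phi> z1 - 1 / \<Phi> z2) = cmod (Fx z1 - Fx z2) \<longrightarrow> z1 = z2"
    using pole_inj[OF r0 holPhi holFx Phip dPhi] by blast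
  define D where "D = ball p \<rho> - {p}"
  have DU: "D \<subseteq> U0"
  proof
    fix z assume "z \<in> D"
    then have "z \<in> ball p r0" "z \<noteq> p" using \<rho> unfolding D_def by auto
    then show "z \<in> U0" by (rule inU)
  qed
  have DU': "ball p \<rho> - {p} \<subseteq> U0" using DU D_def by simp
  have Gphi: "\<And>z. z \<in> D \<Longrightarrow> Gt0 z = 1 / \<Phi> z"
    using DU Gt0_eq unfolding \<Phi>_def Gx_def by auto
  have Fphi: "\<And>z. z \<in> D \<Longrightarrow> Ft0 z = Fx z" using DU Ft0_eq by auto
  have GW: "\<And>z. z \<in> D \<Longrightarrow> Gt0 z = W z / D1 z" using DU Gt0_eq unfolding Gx_def by auto
  define X where "X z = Gt0 z + cnj (Ft0 z)" for z
  have injX: "inj_on X D"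
  proof (rule inj_onI)
    fix z1 z2 assume z: "z1 \<in> D" "z2 \<in> D" and e: "X z1 = X z2"
    then have "Gt0 z1 - Gt0 z2 = cnj (Ft0 z2 - Ft0 z1)" unfolding X_def by (simp add: algebra_simps)
    then have "cmod (Gt0 z1 - Gt0 z2) = cmod (Ft0 z2 - Ft0 z1)" by (simp only: complex_mod_cnj)
    then have "cmod (Gt0 z1 - Gt0 z2) = cmod (Ft0 z1 - Ft0 z2)" by (simp only: norm_minus_commute)
    then have "cmod (1 / \<Phi> z1 - 1 / \<Phi> z2) = cmod (Fx z1 - Fx z2)" using z Gphi Fphi by simp
    then show "z1 = z2" using injP z unfolding D_def by blast
  qed
  have fstpsi: "\<forall>z\<in>ball p \<rho> - {p}. fst (\<psi> z) = X z" using psi DU unfolding D_def X_def by auto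
  have emb: "embedded_end U0 \<psi> p"
    unfolding embedded_end_def
  proof (intro exI[of _ \<rho>] conjI)
    show "\<rho> > 0" "ball p \<rho> - {p} \<subseteq> U0" using \<rho> DU' by auto
    show "inj_on \<psi> (ball p \<rho> - {p})"
    proof (rule inj_onI)
      fix z1 z2 assume z: "z1 \<in> ball p \<rho> - {p}" "z2 \<in> ball p \<rho> - {p}" and e: "\<psi> z1 = \<psi> z2"
      then have "X z1 = X z2" using fstpsi by metis
      then show "z1 = z2" using injX z unfolding D_def inj_on_def by blast
    qed
  qed
  have evD: "eventually (\<lambda>z. z \<in> D) (at p)"
    unfolding eventually_at D_def using \<rho> by (auto intro!: exI[of _ \<rho>] simp: dist_commute)
  have Ginf: "filterlim Gt0 at_infinity (at p)"
  proof -
    have "(W \<longlongrightarrow> W p) (at p)" using contW by (simp add: continuous_on_eq_continuous_at isCont_def)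
    moreover have "filterlim D1 (at 0) (at p)"
    proof (rule filterlim_atI)
      have "isCont D1 p" using contD1 by (simp add: continuous_on_eq_continuous_at)
      then show "(D1 \<longlongrightarrow> 0) (at p)" using pD by (simp add: isCont_def)
      show "eventually (\<lambda>z. D1 z \<noteq> 0) (at p)" using evD by eventually_elim (use DU U0_def in auto)
    qed
    ultimately have "filterlim (\<lambda>z. W z / D1 z) at_infinity (at p)" using Wp0 by (rule filterlim_divide_at_infinity)
    moreover have "eventually (\<lambda>z. W z / D1 z = Gt0 z) (at p)" using evD by eventually_elim (use GW in auto)
    ultimately show ?thesis using filterlim_cong by fastforce
  qed
  have Flim: "(Ft0 \<longlongrightarrow> F0) (at p)"
  proof -
    have "continuous_on (ball p r0) Fx" by (rule holomorphic_on_imp_continuous_on[OF holFx])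
    then have "isCont Fx p" by (rule continuous_on_interior) (use r0 in simp)
    then have "(Fx \<longlongrightarrow> F0) (at p)" unfolding F0_def by (simp add: isCont_def)
    moreover have "eventually (\<lambda>z. Fx z = Ft0 z) (at p)" using evD by eventually_elim (use Fphi in auto)
    ultimately show ?thesis using tendsto_cong by fastforce
  qed
  have comp: "complete_end U0 Gt0 Ft0 p"
    by (rule complete_gen[OF \<rho>(1) DU' holomorphic_on_subset[OF holGt0 DU'] Ginf])
  have Xinf: "filterlim X at_infinity (at p)" unfolding X_def
    by (rule tendsto_add_filterlim_at_infinity'[OF Ginf tendsto_cnj[OF Flim]])
  have contX: "continuous_on (ball p \<rho> - {p}) X" unfolding X_def
    using holomorphic_on_imp_continuous_on[OF holomorphic_on_subset[OF holGt0 DU']]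
      holomorphic_on_imp_continuous_on[OF holomorphic_on_subset[OF holFt0 DU']]
    by (intro continuous_intros) auto
  define Nn where "Nn z = - (A^2) * z * D1 z - B / C - W z * F0" for z
  have Nnp: "Nn p = 0" unfolding Nn_def pD F0 Wp using A0 C0 by (simp add: field_simps)
  have holNn: "Nn holomorphic_on UNIV" unfolding Nn_def by (intro holomorphic_intros holD1 holW)
  obtain N' where N': "(Nn has_field_derivative N') (at p)" using holNn by (auto simp: holomorphic_on_open)
  have "k * (B * u p) = B * (k * u p)" by (simp add: algebra_simps)
  then have D1': "k * (B * u p) \<noteq> 0" using up B0 by simp
  have "((\<lambda>z. Nn z / D1 z) \<longlongrightarrow> N' / (k * (B * u p))) (at p)"
    by (rule ratio_lim[OF N' dD1 Nnp pD D1'])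
  then have hl0: "((\<lambda>z. Re (Nn z / D1 z)) \<longlongrightarrow> Re (N' / (k * (B * u p)))) (at p)" by (rule tendsto_Re)
  have "eventually (\<lambda>z. Re (Nn z / D1 z) = hh z - Re (Gt0 z * F0)) (at p)"
    using evD
  proof eventually_elim
    case (elim z)
    have d1: "D1 z \<noteq> 0" using elim DU U0_def by auto
    have "Nn z / D1 z = - (A^2) * z - (B / C) * (1 / D1 z) - Gt0 z * F0"
      unfolding Nn_def GW[OF elim] using d1 by (simp add: field_simps)
    then show ?case unfolding hh_Re by simp
  qed
  then have hlim: "((\<lambda>z. hh z - Re (Gt0 z * F0)) \<longlongrightarrow> Re (N' / (k * (B * u p)))) (at p)"
    using tendsto_cong hl0 by fastforce
  define T1 where "T1 = 2 * cnj F0"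
  have "((\<lambda>z. - (cmod (Ft0 z))\<^sup>2 - 2 * (hh z - Re (Gt0 z * F0)) - 2 * K0 + 2 * Re (cnj (Ft0 z) * F0) - 2 * (cmod F0)\<^sup>2)
      \<longlongrightarrow> - (cmod F0)\<^sup>2 - 2 * Re (N' / (k * (B * u p))) - 2 * K0 + 2 * Re (cnj F0 * F0) - 2 * (cmod F0)\<^sup>2) (at p)"
    by (intro tendsto_intros Flim hlim)
  moreover have "eventually (\<lambda>z. - (cmod (Ft0 z))\<^sup>2 - 2 * (hh z - Re (Gt0 z * F0)) - 2 * K0 + 2 * Re (cnj (Ft0 z) * F0) - 2 * (cmod F0)\<^sup>2
      = snd (\<psi> z) - 1 * (cmod (X z - T1))\<^sup>2 / 2) (at p)"
    using evD
  proof eventually_elim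
    case (elim z)
    have "\<psi> z = (Gt0 z + cnj (Ft0 z), (cmod (Gt0 z))\<^sup>2 / 2 - (cmod (Ft0 z))\<^sup>2 / 2 + Re (Gt0 z * Ft0 z) - 2 * (hh z + K0))"
      using psi DU elim by auto
    then have "snd (\<psi> z) - 1 * (cmod (X z - T1))\<^sup>2 / 2 = (cmod (Gt0 z))\<^sup>2 / 2 - (cmod (Ft0 z))\<^sup>2 / 2 + Re (Gt0 z * Ft0 z) - 2 * (hh z + K0)
        - (cmod (Gt0 z + cnj (Ft0 z) - 2 * cnj F0))\<^sup>2 / 2" unfolding X_def T1_def by simp
    then show ?case using ident_A[of "Gt0 z" "Ft0 z" "hh z" K0 F0] by simp
  qed
  ultimately have Hlim: "((\<lambda>z. snd (\<psi> z) - 1 * (cmod (X z - T1))\<^sup>2 / 2) \<longlongrightarrow>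
      - (cmod F0)\<^sup>2 - 2 * Re (N' / (k * (B * u p))) - 2 * K0 + 2 * Re (cnj F0 * F0) - 2 * (cmod F0)\<^sup>2) (at p)"
    using tendsto_cong by fastforce
  have rev: "end_revolution_type U0 \<psi> p"
    by (rule end_gen[OF \<rho>(1) DU' contX _ Xinf fstpsi _ Hlim]) (use injX D_def in auto)
  show ?thesis using comp emb rev by blast
qed


lemma complete_swap: "complete_end U G F p = complete_end U F G p"
  unfolding complete_end_def by (simp add: add.commute)

lemma endB:
  assumes qD: "D2 q = 0"
    and psi: "\<forall>z\<in>U0. \<psi> z = (Gt0 z + cnj (Ft0 z), (cmod (Gt0 z))\<^sup>2 / 2 - (cmod (Ft0 z))\<^sup>2 / 2 + Re (Gt0 z * Ft0 z) - 2 * (hh z + K0))"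
  shows "complete_end U0 Gt0 Ft0 q \<and> embedded_end U0 \<psi> q \<and> end_revolution_type U0 \<psi> q"
proof -
  have uq: "(1 - B) * (k * u q) = - (1 + B)" using qD unfolding D2_def by (simp add: add_eq_0_iff mult.assoc)
  have D1q: "D1 q \<noteq> 0" using D1_zero_D2 qD B0 by force
  have D3q: "D3 q \<noteq> 0"
  proof
    assume d: "D3 q = 0"
    have "(1 - B) * D3 q = (1 - B)^2 + (1 + B) * ((1 - B) * (k * u q))" unfolding D3_def by (simp add: algebra_simps power2_eq_square)
    also have "\<dots> = - 4 * B" unfolding uq by (simp add: algebra_simps power2_eq_square)
    finally show False using d B0 by simp
  qed
  have Mq0: "Mx q \<noteq> 0" unfolding Mx_def using A0 D3q by simp
  define G0 where "G0 = Gx q"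
  obtain r1 where r1: "r1 > 0" "\<forall>z\<in>ball q r1. D1 z \<noteq> 0" using nonzero_near[OF contD1 D1q] by blast
  obtain r2 where r2: "r2 > 0" "\<forall>z\<in>ball q r2. Mx z \<noteq> 0" using nonzero_near[OF contMx Mq0] by blast
  define r0 where "r0 = min (min r1 r2) (2 * pi / b)"
  have r0: "r0 > 0" unfolding r0_def using r1 r2 b_pos by simp
  have D1b: "\<forall>z\<in>ball q r0. D1 z \<noteq> 0" using r1 unfolding r0_def by auto
  have Mb: "\<And>z. z \<in> ball q r0 \<Longrightarrow> Mx z \<noteq> 0" using r2 unfolding r0_def by auto
  have inU: "\<And>z. z \<in> ball q r0 \<Longrightarrow> z \<noteq> q \<Longrightarrow> z \<in> U0"
    using U0_ballB[OF _ _ _ D1b qD] unfolding r0_def by auto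
  define \<Phi> where "\<Phi> z = D2 z / Mx z" for z
  have holPhi: "\<Phi> holomorphic_on ball q r0" unfolding \<Phi>_def
    by (rule holomorphic_on_divide[OF holD2 holMx Mb])
  have Phiq: "\<Phi> q = 0" unfolding \<Phi>_def qD by simp
  have D2'0: "(1 - B) * k * (B * u q) \<noteq> 0"
  proof -
    have "(1 - B) * k * (B * u q) = B * ((1 - B) * (k * u q))" by (simp add: algebra_simps)
    also have "\<dots> = - B * (1 + B)" unfolding uq by (simp add: algebra_simps)
    finally show ?thesis using B0 B1' by simp
  qed
  have dPhi: "deriv \<Phi> q \<noteq> 0"
  proof -
    obtain w' where w': "(Mx has_field_derivative w') (at q)" using dMx by blast
    have "(\<Phi> has_field_derivative ((1 - B) * k * (B * u q) * Mx q - D2 q * w') / (Mx q * Mx q)) (at q)"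
      unfolding \<Phi>_def by (rule DERIV_divide[OF dD2 w' Mq0])
    then have "deriv \<Phi> q = ((1 - B) * k * (B * u q) * Mx q - D2 q * w') / (Mx q * Mx q)" by (rule DERIV_imp_deriv)
    also have "\<dots> = (1 - B) * k * (B * u q) / Mx q" using qD Mq0 by (simp add: field_simps)
    finally show ?thesis using D2'0 Mq0 by simp
  qed
  have holGx: "Gx holomorphic_on ball q r0" unfolding Gx_lam
    by (rule holomorphic_on_divide[OF holW holD1]) (use D1b in auto)
  obtain \<rho> where \<rho>: "\<rho> > 0" "\<rho> \<le> r0" and Phinz: "\<forall>z\<in>ball q \<rho> - {q}. \<Phi> z \<noteq> 0"
    and injP: "\<forall>z1\<in>ball q \<rho> - {q}. \<forall>z2\<in>ball q \<rho> - {q}. cmod (1 / \<Phi> z1 - 1 / \<Phi> z2) = cmod (Gx z1 - Gx z2) \<longrightarrow> z1 = z2"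
    using pole_inj[OF r0 holPhi holGx Phiq dPhi] by blast
  define D where "D = ball q \<rho> - {q}"
  have DU: "D \<subseteq> U0"
  proof
    fix z assume "z \<in> D"
    then have "z \<in> ball q r0" "z \<noteq> q" using \<rho> unfolding D_def by auto
    then show "z \<in> U0" by (rule inU)
  qed
  have DU': "ball q \<rho> - {q} \<subseteq> U0" using DU D_def by simp
  have Fphi: "\<And>z. z \<in> D \<Longrightarrow> Ft0 z = 1 / \<Phi> z"
    using DU Ft0_eq unfolding \<Phi>_def Fx_def by auto
  have Gphi: "\<And>z. z \<in> D \<Longrightarrow> Gt0 z = Gx z" using DU Gt0_eq by auto
  have FM: "\<And>z. z \<in> D \<Longrightarrow> Ft0 z = Mx z / D2 z" using DU Ft0_eq unfolding Fx_def by auto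
  define X where "X z = Gt0 z + cnj (Ft0 z)" for z
  have injX: "inj_on X D"
  proof (rule inj_onI)
    fix z1 z2 assume z: "z1 \<in> D" "z2 \<in> D" and e: "X z1 = X z2"
    then have "Gt0 z1 - Gt0 z2 = cnj (Ft0 z2 - Ft0 z1)" unfolding X_def by (simp add: algebra_simps)
    then have "cmod (Gt0 z1 - Gt0 z2) = cmod (Ft0 z2 - Ft0 z1)" by (simp only: complex_mod_cnj)
    then have "cmod (Ft0 z1 - Ft0 z2) = cmod (Gt0 z1 - Gt0 z2)" by (simp only: norm_minus_commute)
    then have "cmod (1 / \<Phi> z1 - 1 / \<Phi> z2) = cmod (Gx z1 - Gx z2)" using z Gphi Fphi by simp
    then show "z1 = z2" using injP z unfolding D_def by blast
  qed
  have fstpsi: "\<forall>z\<in>ball q \<rho> - {q}. fst (\<psi> z) = X z" using psi DU unfolding D_def X_def by auto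
  have emb: "embedded_end U0 \<psi> q"
    unfolding embedded_end_def
  proof (intro exI[of _ \<rho>] conjI)
    show "\<rho> > 0" "ball q \<rho> - {q} \<subseteq> U0" using \<rho> DU' by auto
    show "inj_on \<psi> (ball q \<rho> - {q})"
    proof (rule inj_onI)
      fix z1 z2 assume z: "z1 \<in> ball q \<rho> - {q}" "z2 \<in> ball q \<rho> - {q}" and e: "\<psi> z1 = \<psi> z2"
      then have "X z1 = X z2" using fstpsi by metis
      then show "z1 = z2" using injX z unfolding D_def inj_on_def by blast
    qed
  qed
  have evD: "eventually (\<lambda>z. z \<in> D) (at q)"
    unfolding eventually_at D_def using \<rho> by (auto intro!: exI[of _ \<rho>] simp: dist_commute)
  have Finf: "filterlim Ft0 at_infinity (at q)"
  proof -
    have "isCont Mx q" using contMx by (simp add: continuous_on_eq_continuous_at)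
    then have "(Mx \<longlongrightarrow> Mx q) (at q)" by (simp add: isCont_def)
    moreover have "filterlim D2 (at 0) (at q)"
    proof (rule filterlim_atI)
      have "isCont D2 q" using contD2 by (simp add: continuous_on_eq_continuous_at)
      then show "(D2 \<longlongrightarrow> 0) (at q)" using qD by (simp add: isCont_def)
      show "eventually (\<lambda>z. D2 z \<noteq> 0) (at q)" using evD by eventually_elim (use DU U0_def in auto)
    qed
    ultimately have "filterlim (\<lambda>z. Mx z / D2 z) at_infinity (at q)" using Mq0 by (rule filterlim_divide_at_infinity)
    moreover have "eventually (\<lambda>z. Mx z / D2 z = Ft0 z) (at q)" using evD by eventually_elim (use FM in auto)
    ultimately show ?thesis using filterlim_cong by fastforce
  qed
  have Glim: "(Gt0 \<longlongrightarrow> G0) (at q)"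
  proof -
    have "continuous_on (ball q r0) Gx" by (rule holomorphic_on_imp_continuous_on[OF holGx])
    then have "isCont Gx q" by (rule continuous_on_interior) (use r0 in simp)
    then have "(Gx \<longlongrightarrow> G0) (at q)" unfolding G0_def by (simp add: isCont_def)
    moreover have "eventually (\<lambda>z. Gx z = Gt0 z) (at q)" using evD by eventually_elim (use Gphi in auto)
    ultimately show ?thesis using tendsto_cong by fastforce
  qed
  have comp: "complete_end U0 Gt0 Ft0 q"
    unfolding complete_swap[of U0 Gt0]
    by (rule complete_gen[OF \<rho>(1) DU' holomorphic_on_subset[OF holFt0 DU'] Finf])
  have cinf: "filterlim (\<lambda>z. cnj (Ft0 z)) at_infinity (at q)"
    by (rule filterlim_norm_at_top_imp_at_infinity)
       (use filterlim_at_infinity_imp_norm_at_top[OF Finf] in simp)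
  have Xinf: "filterlim X at_infinity (at q)" unfolding X_def
    by (rule tendsto_add_filterlim_at_infinity[OF Glim cinf])
  have contX: "continuous_on (ball q \<rho> - {q}) X" unfolding X_def
    using holomorphic_on_imp_continuous_on[OF holomorphic_on_subset[OF holGt0 DU']]
      holomorphic_on_imp_continuous_on[OF holomorphic_on_subset[OF holFt0 DU']]
    by (intro continuous_intros) auto
  define Nn where "Nn z = Mx z * (Gx z - G0)" for z
  have Nnq: "Nn q = 0" unfolding Nn_def G0_def by simp
  obtain w' where w': "(Mx has_field_derivative w') (at q)" using dMx by blast
  have N': "(Nn has_field_derivative (w' * (Gx q - G0) + (exp q * D2 q ^ 2 / (4 * A * C * D1 q ^ 2)) * Mx q)) (at q)"
    unfolding Nn_def using DERIV_mult[OF w' DERIV_diff[OF dGx[OF D1q] DERIV_const]] by simp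
  have "((\<lambda>z. Nn z / D2 z) \<longlongrightarrow> (w' * (Gx q - G0) + (exp q * D2 q ^ 2 / (4 * A * C * D1 q ^ 2)) * Mx q) / ((1 - B) * k * (B * u q))) (at q)"
    by (rule ratio_lim[OF N' dD2 Nnq qD D2'0])
  then have fl0: "((\<lambda>z. Re (Nn z / D2 z)) \<longlongrightarrow> Re ((w' * (Gx q - G0) + (exp q * D2 q ^ 2 / (4 * A * C * D1 q ^ 2)) * Mx q) / ((1 - B) * k * (B * u q)))) (at q)"
    by (rule tendsto_Re)
  have "eventually (\<lambda>z. Re (Nn z / D2 z) = Re (Ft0 z * (Gt0 z - G0))) (at q)"
    using evD
  proof eventually_elim
    case (elim z)
    show ?case unfolding Nn_def FM[OF elim] Gphi[OF elim] by simp
  qed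
  then have flim: "((\<lambda>z. Re (Ft0 z * (Gt0 z - G0))) \<longlongrightarrow> Re ((w' * (Gx q - G0) + (exp q * D2 q ^ 2 / (4 * A * C * D1 q ^ 2)) * Mx q) / ((1 - B) * k * (B * u q)))) (at q)"
    using tendsto_cong fl0 by fastforce
  have hlim: "(hh \<longlongrightarrow> hh q) (at q)"
  proof -
    have "isCont D1 q" using contD1 by (simp add: continuous_on_eq_continuous_at)
    then have "(D1 \<longlongrightarrow> D1 q) (at q)" by (simp add: isCont_def)
    then have "((\<lambda>z. Re (- (A^2) * z - (B / C) * (1 / D1 z))) \<longlongrightarrow> Re (- (A^2) * q - (B / C) * (1 / D1 q))) (at q)"
      using D1q by (intro tendsto_intros) auto
    then show ?thesis unfolding hh_Re .
  qed
  define T1 where "T1 = 2 * G0"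
  have "((\<lambda>z. (cmod (Gt0 z))\<^sup>2 - 2 * Re (Gt0 z * cnj G0) + 2 * (cmod G0)\<^sup>2 + 2 * Re (Ft0 z * (Gt0 z - G0)) - 2 * (hh z + K0))
      \<longlongrightarrow> (cmod G0)\<^sup>2 - 2 * Re (G0 * cnj G0) + 2 * (cmod G0)\<^sup>2
          + 2 * Re ((w' * (Gx q - G0) + (exp q * D2 q ^ 2 / (4 * A * C * D1 q ^ 2)) * Mx q) / ((1 - B) * k * (B * u q)))
          - 2 * (hh q + K0)) (at q)"
    by (intro tendsto_intros Glim flim hlim)
  moreover have "eventually (\<lambda>z. (cmod (Gt0 z))\<^sup>2 - 2 * Re (Gt0 z * cnj G0) + 2 * (cmod G0)\<^sup>2 + 2 * Re (Ft0 z * (Gt0 z - G0)) - 2 * (hh z + K0)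
      = snd (\<psi> z) - (-1) * (cmod (X z - T1))\<^sup>2 / 2) (at q)"
    using evD
  proof eventually_elim
    case (elim z)
    have "\<psi> z = (Gt0 z + cnj (Ft0 z), (cmod (Gt0 z))\<^sup>2 / 2 - (cmod (Ft0 z))\<^sup>2 / 2 + Re (Gt0 z * Ft0 z) - 2 * (hh z + K0))"
      using psi DU elim by auto
    then have "snd (\<psi> z) - (-1) * (cmod (X z - T1))\<^sup>2 / 2 = (cmod (Gt0 z))\<^sup>2 / 2 - (cmod (Ft0 z))\<^sup>2 / 2 + Re (Gt0 z * Ft0 z) - 2 * (hh z + K0)
        - (-1) * (cmod (Gt0 z + cnj (Ft0 z) - 2 * G0))\<^sup>2 / 2" unfolding X_def T1_def by simp
    then show ?case using ident_B[of "Gt0 z" "Ft0 z" "hh z" K0 G0] by simp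
  qed
  ultimately have Hlim: "((\<lambda>z. snd (\<psi> z) - (-1) * (cmod (X z - T1))\<^sup>2 / 2) \<longlongrightarrow>
      (cmod G0)\<^sup>2 - 2 * Re (G0 * cnj G0) + 2 * (cmod G0)\<^sup>2
          + 2 * Re ((w' * (Gx q - G0) + (exp q * D2 q ^ 2 / (4 * A * C * D1 q ^ 2)) * Mx q) / ((1 - B) * k * (B * u q)))
          - 2 * (hh q + K0)) (at q)"
    using tendsto_cong by fastforce
  have rev: "end_revolution_type U0 \<psi> q"
    by (rule end_gen[OF \<rho>(1) DU' contX _ Xinf fstpsi _ Hlim]) (use injX D_def in auto)
  show ?thesis using comp emb rev by blast
qed

end

theorem mainTheorem4:
  fixes a c b :: real and k :: complex and n m :: nat
    and G F R Gt Ft :: "complex \<Rightarrow> complex" and U :: "complex set"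
  assumes a: "a \<noteq> 0" and c: "c \<noteq> 0" and k: "k \<noteq> 0"
    and b_def: "b = sqrt (1 + 4 * a\<^sup>2 * c)"
    and b_rat: "b = real n / real m" and m: "m > 0" and cop: "coprime n m"
    and b0: "b \<noteq> 0" and b1: "b \<noteq> 1"
    and G_def: "G = (\<lambda>z. complex_of_real a * exp z)"
    and F_def: "F = (\<lambda>z. - complex_of_real a * exp (- z))"
    and R_def: "R = (\<lambda>z. exp z / complex_of_real (2 * a * c) *
                  ((1 + complex_of_real b + complex_of_real (1 - b) * k * exp (complex_of_real b * z))
                   / (1 + k * exp (complex_of_real b * z))))"
    and U_def: "U = {z. 1 + k * exp (complex_of_real b * z) \<noteq> 0 \<and>
                     1 + complex_of_real b + complex_of_real (1 - b) * k * exp (complex_of_real b * z) \<noteq> 0}"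
    and Gt_def: "Gt = (\<lambda>z. G z + R z)"
    and Ft_def: "Ft = (\<lambda>z. F z + 1 / (complex_of_real c * R z))"
  shows "(\<exists>\<psi>. iam_map U Gt Ft \<psi>) \<and>
    (\<forall>\<psi>. iam_map U Gt Ft \<psi> \<longrightarrow>
       (\<forall>z\<in>U. z + complex_of_real (2 * real m * pi) * \<i> \<in> U \<and>
               \<psi> (z + complex_of_real (2 * real m * pi) * \<i>) = \<psi> z) \<and>
       (\<exists>K. compact K \<and> K \<subseteq> U \<and>
            singular_set U Gt Ft \<subseteq> (\<Union>j::int. (\<lambda>z. z + of_int j * complex_of_real (2 * real m * pi) * \<i>) ` K)) \<and>
       (\<exists>E. finite E \<and> card E = 2 * n \<and> E \<subseteq> - U \<and>
            (\<forall>p\<in>E. \<forall>q\<in>E. \<forall>j::int. p = q + of_int j * complex_of_real (2 * real m * pi) * \<i> \<longrightarrow> p = q) \<and>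
            (\<forall>q\<in>- U. \<exists>p\<in>E. \<exists>j::int. q = p + of_int j * complex_of_real (2 * real m * pi) * \<i>) \<and>
            (\<forall>p\<in>E. complete_end U Gt Ft p \<and> embedded_end U \<psi> p \<and> end_revolution_type U \<psi> p)))"
  proof -
  interpret sett a c b k n m using a c k b_def b_rat m b0 b1 by unfold_locales
  have GtE: "Gt = Gt0" unfolding Gt_def G_def R_def Gt0_def by simp
  have FtE: "Ft = Ft0" unfolding Ft_def F_def R_def Ft0_def by simp
  have UE: "U = U0" unfolding U_def U0_def D1_def D2_def u_def by auto
  have P1: "complex_of_real (2 * real m * pi) * \<i> = Pj 1" unfolding Pj_def by simp
  show ?thesis unfolding GtE FtE UE
  proof (intro conjI allI impI)
    show "\<exists>\<psi>. iam_map U0 Gt0 Ft0 \<psi>" using iam_psiE by blast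
    fix \<psi> assume iam: "iam_map U0 Gt0 Ft0 \<psi>"
    obtain K0 where K0: "\<forall>z\<in>U0. \<psi> z = (Gt0 z + cnj (Ft0 z),
            (cmod (Gt0 z))\<^sup>2 / 2 - (cmod (Ft0 z))\<^sup>2 / 2 + Re (Gt0 z * Ft0 z) - 2 * (hh z + K0))"
      using h_unique[OF iam] by blast
    show "\<forall>z\<in>U0. z + complex_of_real (2 * real m * pi) * \<i> \<in> U0 \<and>
               \<psi> (z + complex_of_real (2 * real m * pi) * \<i>) = \<psi> z"
    proof
      fix z assume z: "z \<in> U0"
      have z': "z + Pj 1 \<in> U0" using z U0_shift by simp
      moreover have "\<psi> (z + Pj 1) = \<psi> z"
        using K0 z z' by (simp add: Gt0_shift Ft0_shift hh_shift)
      ultimately show "z + complex_of_real (2 * real m * pi) * \<i> \<in> U0 \<and>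
               \<psi> (z + complex_of_real (2 * real m * pi) * \<i>) = \<psi> z" unfolding P1 by simp
    qed
    show "\<exists>K. compact K \<and> K \<subseteq> U0 \<and>
            singular_set U0 Gt0 Ft0 \<subseteq> (\<Union>j::int. (\<lambda>z. z + of_int j * complex_of_real (2 * real m * pi) * \<i>) ` K)"
      by (rule sing_cover)
    show "\<exists>E. finite E \<and> card E = 2 * n \<and> E \<subseteq> - U0 \<and>
            (\<forall>p\<in>E. \<forall>q\<in>E. \<forall>j::int. p = q + of_int j * complex_of_real (2 * real m * pi) * \<i> \<longrightarrow> p = q) \<and>
            (\<forall>q\<in>- U0. \<exists>p\<in>E. \<exists>j::int. q = p + of_int j * complex_of_real (2 * real m * pi) * \<i>) \<and>
            (\<forall>p\<in>E. complete_end U0 Gt0 Ft0 p \<and> embedded_end U0 \<psi> p \<and> end_revolution_type U0 \<psi> p)"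
    proof (intro exI[of _ EE] conjI)
      show "finite EE" by (rule EE_finite)
      show "card EE = 2 * n" by (rule EE_card)
      show "EE \<subseteq> - U0" by (rule EE_sub)
      show "\<forall>p\<in>EE. \<forall>q\<in>EE. \<forall>j::int. p = q + of_int j * complex_of_real (2 * real m * pi) * \<i> \<longrightarrow> p = q"
        using EE_mod by blast
      show "\<forall>q\<in>- U0. \<exists>p\<in>EE. \<exists>j::int. q = p + of_int j * complex_of_real (2 * real m * pi) * \<i>"
        using EE_cover by blast
      show "\<forall>p\<in>EE. complete_end U0 Gt0 Ft0 p \<and> embedded_end U0 \<psi> p \<and> end_revolution_type U0 \<psi> p"
      proof
        fix p assume pE: "p \<in> EE"
        show "complete_end U0 Gt0 Ft0 p \<and> embedded_end U0 \<psi> p \<and> end_revolution_type U0 \<psi> p"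
          using pE unfolding EE_def
        proof
          assume "p \<in> pA ` {..<n}"
          then have "D1 p = 0" using D1_pA by auto
          then show ?thesis by (rule endA[OF _ K0])
        next
          assume "p \<in> pB ` {..<n}"
          then have "D2 p = 0" using D2_pB by auto
          then show ?thesis by (rule endB[OF _ K0])
        qed
      qed
    qed
  qed
qed

end
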